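(* Let $(X,r)$ be a finite simple solution of the YBE such that $|X|$ is not prime, and let $\mathcal G=\mathcal G(X,r)$ with its natural left brace structure. Let $I$ be a minimal nonzero ideal of the left brace $\mathcal G$. Then $\mathcal G/I$ is a trivial left brace whose additive group is cyclic, and $$I=\mathcal G^2=\langle \sigma_x-\sigma_y \mid x,y\in X\rangle_+ .$$ Moreover $\mathrm{soc}(\mathcal G)=\{0\}$.
   Context: A solution of the YBE is a pair $(X,r)$, $X$ nonempty, $r:X\times X\to X\times X$, $r(x,y)=(\sigma_x(y),\gamma_y(x))$, with $r^2=\mathrm{id}$, all $\sigma_x,\gamma_x$ bijective, and $r_{12}r_{23}r_{12}=r_{23}r_{12}r_{23}$ on $X^3$ ($r_{12}=r\times \mathrm{id}$, $r_{23}=\mathrm{id}\times r$). $\mathcal G(X,r)=\langle\sigma_x:x\in X\rangle\le\mathrm{Sym}_X$. Homomorphisms of solutions are maps $f$ with $f(\sigma_x(y))=\sigma'_{f(x)}(f(y))$; $(X,r)$ is simple if $|X|>1$ and every surjective homomorphism of solutions from $(X,r)$ is bijective or has one-point image. A left brace is a set $B$ with operations $+$ and $\circ$ (written $ab=a\circ b$) such that $(B,+)$ is an abelian group, $(B,\circ)$ is a group and $a(b+c)+a=ab+ac$ for all $a,b,c$; the neutral elements coincide (denoted $0$). Its lambda map is $\lambda_a(b)=-a+ab$, giving a homomorphism $(B,\circ)\to\mathrm{Aut}(B,+)$. $B$ is trivial if $ab=a+b$ for all $a,b$. $\mathrm{soc}(B)=\{a: ab=a+b\ \forall b\}$. An ideal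 is a normal subgroup $I$ of $(B,\circ)$ with $\lambda_a(I)\subseteq I$ for all $a$; then $B/I$ is a left brace. $a*b=\lambda_a(b)-b$ and $B^2$ is the additive subgroup generated by all $a*b$. The structure group $G(X,r)$ (generators $X$, relations $xy=\sigma_x(y)\gamma_y(x)$) has a left brace structure with additive group free abelian on $X$ and $\lambda_x(y)=\sigma_x(y)$; the map $x\mapsto\sigma_x$ extends to a surjective group homomorphism $\phi:G(X,r)\to\mathcal G(X,r)$ with kernel $\mathrm{soc}(G(X,r))$, and the natural left brace structure on $\mathcal G(X,r)$ is the unique one making $\phi$ a homomorphism of left braces. *)

theory Defs
  imports "HOL-Algebra.Generated_Groups" "HOL-Algebra.Bij" "HOL-Computational_Algebra.Primes"
begin

definition ybe_r :: "('a \<Rightarrow> 'a \<Rightarrow> 'a) \<Rightarrow> ('a \<Rightarrow> 'a \<Rightarrow> 'a) \<Rightarrow> 'a \<times> 'a \<Rightarrow> 'a \<times> 'a" where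
  "ybe_r s g = (\<lambda>(x, y). (s x y, g y x))"

definition r12 :: "('a \<times> 'a \<Rightarrow> 'a \<times> 'a) \<Rightarrow> 'a \<times> 'a \<times> 'a \<Rightarrow> 'a \<times> 'a \<times> 'a" where
  "r12 r = (\<lambda>(x, y, z). (fst (r (x, y)), snd (r (x, y)), z))"

definition r23 :: "('a \<times> 'a \<Rightarrow> 'a \<times> 'a) \<Rightarrow> 'a \<times> 'a \<times> 'a \<Rightarrow> 'a \<times> 'a \<times> 'a" where
  "r23 r = (\<lambda>(x, y, z). (x, fst (r (y, z)), snd (r (y, z))))"

definition ybe_solution :: "'a set \<Rightarrow> ('a \<Rightarrow> 'a \<Rightarrow> 'a) \<Rightarrow> ('a \<Rightarrow> 'a \<Rightarrow> 'a) \<Rightarrow> bool" where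
  "ybe_solution X s g \<longleftrightarrow>
     X \<noteq> {} \<and>
     (\<forall>x\<in>X. bij_betw (s x) X X \<and> bij_betw (g x) X X) \<and>
     (\<forall>x\<in>X. \<forall>y\<in>X. ybe_r s g (ybe_r s g (x, y)) = (x, y)) \<and>
     (\<forall>x\<in>X. \<forall>y\<in>X. \<forall>z\<in>X.
        r12 (ybe_r s g) (r23 (ybe_r s g) (r12 (ybe_r s g) (x, y, z))) =
        r23 (ybe_r s g) (r12 (ybe_r s g) (r23 (ybe_r s g) (x, y, z))))"

definition sol_hom :: "'a set \<Rightarrow> ('a \<Rightarrow> 'a \<Rightarrow> 'a) \<Rightarrow> 'b set \<Rightarrow> ('b \<Rightarrow> 'b \<Rightarrow> 'b) \<Rightarrow> ('a \<Rightarrow> 'b) \<Rightarrow> bool" where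
  "sol_hom X s Y t f \<longleftrightarrow>
     (\<forall>x\<in>X. f x \<in> Y) \<and> (\<forall>x\<in>X. \<forall>y\<in>X. f (s x y) = t (f x) (f y))"

text \<open>Target solutions range over sets of the same type as X;
  since the image of a surjection from X has cardinality at most that of X,
  every possible target can be transported into this type, so this is no
  restriction.\<close>

definition simple_solution :: "'a set \<Rightarrow> ('a \<Rightarrow> 'a \<Rightarrow> 'a) \<Rightarrow> ('a \<Rightarrow> 'a \<Rightarrow> 'a) \<Rightarrow> bool" where
  "simple_solution X s g \<longleftrightarrow>
     (\<exists>x\<in>X. \<exists>y\<in>X. x \<noteq> y) \<and>
     (\<forall>(Y::'a set) t d f. ybe_solution Y t d \<and> sol_hom X s Y t f \<and> f ` X = Y
        \<longrightarrow> inj_on f X \<or> (\<exists>p. Y = {p}))"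

text \<open>sigma_x as an element of Sym_X (extensional bijections of X, HOL-Algebra).\<close>

definition sig :: "'a set \<Rightarrow> ('a \<Rightarrow> 'a \<Rightarrow> 'a) \<Rightarrow> 'a \<Rightarrow> ('a \<Rightarrow> 'a)" where
  "sig X s x = restrict (s x) X"

definition perm_group :: "'a set \<Rightarrow> ('a \<Rightarrow> 'a \<Rightarrow> 'a) \<Rightarrow> ('a \<Rightarrow> 'a) set" where
  "perm_group X s = generate (BijGroup X) (sig X s ` X)"

definition add_grp :: "'b set \<Rightarrow> ('b \<Rightarrow> 'b \<Rightarrow> 'b) \<Rightarrow> 'b \<Rightarrow> 'b monoid" where
  "add_grp B add z = \<lparr>carrier = B, monoid.mult = add, one = z\<rparr>"

definition mul_grp :: "'b set \<Rightarrow> ('b \<Rightarrow> 'b \<Rightarrow> 'b) \<Rightarrow> 'b \<Rightarrow> 'b monoid" where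
  "mul_grp B mul z = \<lparr>carrier = B, monoid.mult = mul, one = z\<rparr>"

definition left_brace :: "'b set \<Rightarrow> ('b \<Rightarrow> 'b \<Rightarrow> 'b) \<Rightarrow> ('b \<Rightarrow> 'b \<Rightarrow> 'b) \<Rightarrow> 'b \<Rightarrow> bool" where
  "left_brace B add mul z \<longleftrightarrow>
     comm_group (add_grp B add z) \<and> group (mul_grp B mul z) \<and>
     (\<forall>a\<in>B. \<forall>b\<in>B. \<forall>c\<in>B. add (mul a (add b c)) a = add (mul a b) (mul a c))"

definition b_neg :: "'b set \<Rightarrow> ('b \<Rightarrow> 'b \<Rightarrow> 'b) \<Rightarrow> 'b \<Rightarrow> 'b \<Rightarrow> 'b" where
  "b_neg B add z a = inv\<^bsub>add_grp B add z\<^esub> a"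

definition b_lambda :: "'b set \<Rightarrow> ('b \<Rightarrow> 'b \<Rightarrow> 'b) \<Rightarrow> ('b \<Rightarrow> 'b \<Rightarrow> 'b) \<Rightarrow> 'b \<Rightarrow> 'b \<Rightarrow> 'b \<Rightarrow> 'b" where
  "b_lambda B add mul z a b = add (b_neg B add z a) (mul a b)"

definition b_star :: "'b set \<Rightarrow> ('b \<Rightarrow> 'b \<Rightarrow> 'b) \<Rightarrow> ('b \<Rightarrow> 'b \<Rightarrow> 'b) \<Rightarrow> 'b \<Rightarrow> 'b \<Rightarrow> 'b \<Rightarrow> 'b" where
  "b_star B add mul z a b = add (b_lambda B add mul z a b) (b_neg B add z b)"

definition b_square :: "'b set \<Rightarrow> ('b \<Rightarrow> 'b \<Rightarrow> 'b) \<Rightarrow> ('b \<Rightarrow> 'b \<Rightarrow> 'b) \<Rightarrow> 'b \<Rightarrow> 'b set" where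
  "b_square B add mul z =
     generate (add_grp B add z) {b_star B add mul z a b | a b. a \<in> B \<and> b \<in> B}"

definition b_socle :: "'b set \<Rightarrow> ('b \<Rightarrow> 'b \<Rightarrow> 'b) \<Rightarrow> ('b \<Rightarrow> 'b \<Rightarrow> 'b) \<Rightarrow> 'b set" where
  "b_socle B add mul = {a \<in> B. \<forall>b\<in>B. mul a b = add a b}"

definition b_ideal :: "'b set \<Rightarrow> ('b \<Rightarrow> 'b \<Rightarrow> 'b) \<Rightarrow> ('b \<Rightarrow> 'b \<Rightarrow> 'b) \<Rightarrow> 'b \<Rightarrow> 'b set \<Rightarrow> bool" where
  "b_ideal B add mul z I \<longleftrightarrow>
     normal I (mul_grp B mul z) \<and> (\<forall>a\<in>B. b_lambda B add mul z a ` I \<subseteq> I)"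

definition minimal_nonzero_ideal :: "'b set \<Rightarrow> ('b \<Rightarrow> 'b \<Rightarrow> 'b) \<Rightarrow> ('b \<Rightarrow> 'b \<Rightarrow> 'b) \<Rightarrow> 'b \<Rightarrow> 'b set \<Rightarrow> bool" where
  "minimal_nonzero_ideal B add mul z I \<longleftrightarrow>
     b_ideal B add mul z I \<and> I \<noteq> {z} \<and>
     (\<forall>J. b_ideal B add mul z J \<and> J \<subseteq> I \<and> J \<noteq> {z} \<longrightarrow> J = I)"

text \<open>The quotient brace B/I: carrier the cosets of I in (B,o), with the
  induced (elementwise) operations and neutral element I.\<close>

definition quot_carrier :: "'b set \<Rightarrow> ('b \<Rightarrow> 'b \<Rightarrow> 'b) \<Rightarrow> 'b \<Rightarrow> 'b set \<Rightarrow> 'b set set" where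
  "quot_carrier B mul z I = rcosets\<^bsub>mul_grp B mul z\<^esub> I"

definition set_op :: "('b \<Rightarrow> 'b \<Rightarrow> 'b) \<Rightarrow> 'b set \<Rightarrow> 'b set \<Rightarrow> 'b set" where
  "set_op f U V = {f u v | u v. u \<in> U \<and> v \<in> V}"

definition trivial_brace :: "'b set \<Rightarrow> ('b \<Rightarrow> 'b \<Rightarrow> 'b) \<Rightarrow> ('b \<Rightarrow> 'b \<Rightarrow> 'b) \<Rightarrow> bool" where
  "trivial_brace B add mul \<longleftrightarrow> (\<forall>a\<in>B. \<forall>b\<in>B. mul a b = add a b)"

definition additive_cyclic :: "'b set \<Rightarrow> ('b \<Rightarrow> 'b \<Rightarrow> 'b) \<Rightarrow> 'b \<Rightarrow> bool" where
  "additive_cyclic B add z \<longleftrightarrow>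
     (\<exists>g\<in>B. B = {g [^]\<^bsub>add_grp B add z\<^esub> (n::int) | n. True})"

text \<open>A left-brace addition on G(X,r) (with composition as multiplication) is
  the natural one iff lambda_{sigma_x}(sigma_y) = sigma_{sigma_x(y)} for all
  x, y in X, i.e. iff phi : G(X,r) -> G(X,r) respects lambda on the
  generators (this determines the structure uniquely).\<close>

definition natural_brace_add :: "'a set \<Rightarrow> ('a \<Rightarrow> 'a \<Rightarrow> 'a) \<Rightarrow> (('a \<Rightarrow> 'a) \<Rightarrow> ('a \<Rightarrow> 'a) \<Rightarrow> ('a \<Rightarrow> 'a)) \<Rightarrow> bool" where
  "natural_brace_add X s add \<longleftrightarrow>
     left_brace (perm_group X s) add (monoid.mult (BijGroup X)) (one (BijGroup X)) \<and>
     (\<forall>x\<in>X. \<forall>y\<in>X.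
        b_lambda (perm_group X s) add (monoid.mult (BijGroup X)) (one (BijGroup X))
          (sig X s x) (sig X s y) = sig X s (s x y))"

end

theory Submission
  imports Defs
begin


lemma sol_closed:
  assumes "ybe_solution X s g" "x \<in> X" "y \<in> X"
  shows "s x y \<in> X" "g x y \<in> X"
  using assms unfolding ybe_solution_def bij_betw_def by auto

lemma sol_inv:
  assumes "ybe_solution X s g" "x \<in> X" "y \<in> X"
  shows "s (s x y) (g y x) = x" "g (g y x) (s x y) = y"
proof -
  have "ybe_r s g (ybe_r s g (x, y)) = (x, y)" using assms unfolding ybe_solution_def by blast
  then show "s (s x y) (g y x) = x" "g (g y x) (s x y) = y" by (simp_all add: ybe_r_def)
qed

lemma cong_simple:
  assumes fin: "finite X" and sol: "ybe_solution X s g" and simple: "simple_solution X s g"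
    and refl: "\<And>x. x \<in> X \<Longrightarrow> E x x"
    and sym: "\<And>x y. x \<in> X \<Longrightarrow> y \<in> X \<Longrightarrow> E x y \<Longrightarrow> E y x"
    and trans: "\<And>x y z. x \<in> X \<Longrightarrow> y \<in> X \<Longrightarrow> z \<in> X \<Longrightarrow> E x y \<Longrightarrow> E y z \<Longrightarrow> E x z"
    and cs: "\<And>x x' y y'. x \<in> X \<Longrightarrow> x' \<in> X \<Longrightarrow> y \<in> X \<Longrightarrow> y' \<in> X \<Longrightarrow> E x x' \<Longrightarrow> E y y'
              \<Longrightarrow> E (s x y) (s x' y')"
    and cg: "\<And>x x' y y'. x \<in> X \<Longrightarrow> x' \<in> X \<Longrightarrow> y \<in> X \<Longrightarrow> y' \<in> X \<Longrightarrow> E x x' \<Longrightarrow> E y y'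
              \<Longrightarrow> E (g x y) (g x' y')"
  shows "(\<forall>x\<in>X. \<forall>y\<in>X. E x y \<longrightarrow> x = y) \<or> (\<forall>x\<in>X. \<forall>y\<in>X. E x y)"
proof -
  define rep where "rep = (\<lambda>x. SOME z. z \<in> X \<and> E x z)"
  have rep1: "rep x \<in> X \<and> E x (rep x)" if "x \<in> X" for x
    unfolding rep_def by (rule someI_ex) (use that refl in blast)
  have repE: "rep x = rep y" if "x \<in> X" "y \<in> X" "E x y" for x y
  proof -
    have "(\<lambda>z. z \<in> X \<and> E x z) = (\<lambda>z. z \<in> X \<and> E y z)"
      using that sym trans by blast
    then show ?thesis unfolding rep_def by simp
  qed
  have reprep: "rep (rep x) = rep x" if "x \<in> X" for x
    using repE[of "rep x" x] rep1[OF that] sym that by auto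
  note sc = sol_closed[OF sol]
  define Y where "Y = rep ` X"
  define t where "t = (\<lambda>a b. rep (s a b))"
  define d where "d = (\<lambda>a b. rep (g a b))"
  have YX: "Y \<subseteq> X" unfolding Y_def using rep1 by auto
  have ts: "t (rep u) (rep v) = rep (s u v)" if "u \<in> X" "v \<in> X" for u v
  proof -
    have "E u (rep u)" "E v (rep v)" "rep u \<in> X" "rep v \<in> X" using rep1 that by auto
    then have "E (s (rep u) (rep v)) (s u v)" using cs[of "rep u" u "rep v" v] sym that by blast
    moreover have "s (rep u) (rep v) \<in> X" "s u v \<in> X" using sc that \<open>rep u \<in> X\<close> \<open>rep v \<in> X\<close> by auto
    ultimately show ?thesis unfolding t_def by (intro repE)
  qed
  have dg: "d (rep u) (rep v) = rep (g u v)" if "u \<in> X" "v \<in> X" for u v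
  proof -
    have "E u (rep u)" "E v (rep v)" "rep u \<in> X" "rep v \<in> X" using rep1 that by auto
    then have "E (g (rep u) (rep v)) (g u v)" using cg[of "rep u" u "rep v" v] sym that by blast
    moreover have "g (rep u) (rep v) \<in> X" "g u v \<in> X" using sc that \<open>rep u \<in> X\<close> \<open>rep v \<in> X\<close> by auto
    ultimately show ?thesis unfolding d_def by (intro repE)
  qed
  have finY: "finite Y" unfolding Y_def using fin by simp
  have bijt: "bij_betw (t a) Y Y" if aY: "a \<in> Y" for a
  proof -
    obtain x where x: "x \<in> X" "a = rep x" using aY Y_def by auto
    have sub: "t a ` Y \<subseteq> Y" unfolding t_def Y_def using x YX sc rep1 Y_def that by auto
    have "Y \<subseteq> t a ` Y"
    proof
      fix b assume "b \<in> Y"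
      then obtain w where w: "w \<in> X" "b = rep w" using Y_def by auto
      have "bij_betw (s (rep x)) X X" using sol rep1 x unfolding ybe_solution_def by auto
      then obtain v where v: "v \<in> X" "w = s (rep x) v" using w unfolding bij_betw_def by auto
      have "t a (rep v) = rep (s (rep x) (rep v))" using x ts rep1 v by (metis reprep)
      also have "\<dots> = rep (s (rep x) v)" using ts rep1 x v by (metis reprep)
      finally have "t a (rep v) = b" using v w by simp
      moreover have "rep v \<in> Y" using v Y_def by auto
      ultimately show "b \<in> t a ` Y" by blast
    qed
    then have "t a ` Y = Y" using sub by auto
    then show ?thesis using finY by (simp add: bij_betw_def eq_card_imp_inj_on)
  qed
  have bijd: "bij_betw (d a) Y Y" if aY: "a \<in> Y" for a
  proof -
    obtain x where x: "x \<in> X" "a = rep x" using aY Y_def by auto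
    have sub: "d a ` Y \<subseteq> Y" unfolding d_def Y_def using x YX sc rep1 Y_def that by auto
    have "Y \<subseteq> d a ` Y"
    proof
      fix b assume "b \<in> Y"
      then obtain w where w: "w \<in> X" "b = rep w" using Y_def by auto
      have "bij_betw (g (rep x)) X X" using sol rep1 x unfolding ybe_solution_def by auto
      then obtain v where v: "v \<in> X" "w = g (rep x) v" using w unfolding bij_betw_def by auto
      have "d a (rep v) = rep (g (rep x) (rep v))" using x dg rep1 v by (metis reprep)
      also have "\<dots> = rep (g (rep x) v)" using dg rep1 x v by (metis reprep)
      finally have "d a (rep v) = b" using v w by simp
      moreover have "rep v \<in> Y" using v Y_def by auto
      ultimately show "b \<in> d a ` Y" by blast
    qed
    then have "d a ` Y = Y" using sub by auto
    then show ?thesis using finY by (simp add: bij_betw_def eq_card_imp_inj_on)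
  qed
  have inv: "ybe_r t d (ybe_r t d (a, b)) = (a, b)" if ab: "a \<in> Y" "b \<in> Y" for a b
  proof -
    obtain x y where xy: "x \<in> X" "a = rep x" "y \<in> X" "b = rep y" using ab Y_def by auto
    show ?thesis using xy by (simp add: ybe_r_def ts dg sc sol_inv[OF sol])
  qed
  have braid: "r12 (ybe_r t d) (r23 (ybe_r t d) (r12 (ybe_r t d) (a, b, c))) =
        r23 (ybe_r t d) (r12 (ybe_r t d) (r23 (ybe_r t d) (a, b, c)))"
    if abc: "a \<in> Y" "b \<in> Y" "c \<in> Y" for a b c
  proof -
    obtain x y z where xy: "x \<in> X" "a = rep x" "y \<in> X" "b = rep y" "z \<in> X" "c = rep z"
      using abc Y_def by auto
    have "r12 (ybe_r s g) (r23 (ybe_r s g) (r12 (ybe_r s g) (x, y, z))) =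
        r23 (ybe_r s g) (r12 (ybe_r s g) (r23 (ybe_r s g) (x, y, z)))"
      using sol xy unfolding ybe_solution_def by blast
    then show ?thesis using xy by (simp add: ybe_r_def r12_def r23_def ts dg sc)
  qed
  have ysol: "ybe_solution Y t d"
  proof -
    have "X \<noteq> {}" using sol unfolding ybe_solution_def by blast
    then have "Y \<noteq> {}" unfolding Y_def by blast
    then show ?thesis unfolding ybe_solution_def using bijt bijd inv braid by blast
  qed
  have hom: "sol_hom X s Y t rep"
    unfolding sol_hom_def Y_def using ts by auto
  have "inj_on rep X \<or> (\<exists>p. Y = {p})"
    using simple ysol hom unfolding simple_solution_def Y_def by blast
  then show ?thesis
  proof
    assume "inj_on rep X"
    then show ?thesis using repE by (auto dest: inj_onD)
  next
    assume "\<exists>p. Y = {p}"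
    then obtain p where "Y = {p}" by blast
    then have "rep x = p" if "x \<in> X" for x using that Y_def by auto
    then show ?thesis using rep1 sym trans by metis
  qed
qed




lemma fp_in: "f ` X \<subseteq> X \<Longrightarrow> x \<in> X \<Longrightarrow> (f ^^ k) x \<in> X"
  by (induction k) auto

lemma fp_inj: assumes "inj_on f X" "f ` X \<subseteq> X" shows "inj_on (f ^^ k) X"
proof (induction k)
  case 0 then show ?case by simp
next
  case (Suc k)
  have "(f ^^ k) ` X \<subseteq> X" using fp_in[OF assms(2)] by auto
  then have "inj_on (f \<circ> f ^^ k) X" using Suc assms(1) by (meson comp_inj_on inj_on_subset)
  then show ?case by (simp only: funpow.simps)
qed

lemma fp_cancel:
  assumes "inj_on f X" "f ` X \<subseteq> X" "x \<in> X" "(f ^^ i) x = (f ^^ j) x" "i \<le> j"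
  shows "(f ^^ (j - i)) x = x"
proof -
  have "(f ^^ j) x = (f ^^ i) ((f ^^ (j - i)) x)"
    using assms(5) by (metis funpow_add le_add_diff_inverse o_apply)
  then show ?thesis using fp_inj[OF assms(1,2), of i] assms fp_in[OF assms(2)]
    by (metis inj_onD)
qed

lemma fp_period:
  assumes "finite X" "inj_on f X" "f ` X \<subseteq> X" "x \<in> X"
  shows "\<exists>p>0. (f ^^ p) x = x"
proof -
  have "(\<lambda>k. (f ^^ k) x) ` UNIV \<subseteq> X" using fp_in[OF assms(3,4)] by auto
  then have "finite ((\<lambda>k. (f ^^ k) x) ` UNIV)" using assms(1) finite_subset by blast
  then have "\<not> inj (\<lambda>k. (f ^^ k) x)" using finite_imageD by blast
  then obtain i j where ij: "i \<noteq> j" "(f ^^ i) x = (f ^^ j) x" unfolding inj_def by blast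
  show ?thesis
  proof (cases "i < j")
    case True
    then show ?thesis using fp_cancel[OF assms(2,3,4) ij(2)] by (intro exI[of _ "j - i"]) auto
  next
    case False
    then have "j < i" using ij by auto
    then show ?thesis using fp_cancel[OF assms(2,3,4) ij(2)[symmetric]] by (intro exI[of _ "i - j"]) auto
  qed
qed

lemma fp_mult_period: "(f ^^ p) x = x \<Longrightarrow> (f ^^ (p * q)) x = x"
  by (induction q) (auto simp: funpow_add)

lemma fp_mod: assumes "(f ^^ p) x = x" shows "(f ^^ k) x = (f ^^ (k mod p)) x"
proof -
  have "k = k mod p + p * (k div p)" by simp
  then have "(f ^^ k) x = (f ^^ (k mod p)) ((f ^^ (p * (k div p))) x)"
    by (metis funpow_add o_apply)
  then show ?thesis using fp_mult_period[OF assms] by simp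
qed

lemma invset_contra:
  assumes fin: "finite X" and sol: "ybe_solution X s g" and simple: "simple_solution X s g"
    and hs: "\<And>x y. x \<in> X \<Longrightarrow> y \<in> X \<Longrightarrow> s x y \<in> Ob \<longleftrightarrow> y \<in> Ob"
    and hg: "\<And>x y. x \<in> X \<Longrightarrow> y \<in> X \<Longrightarrow> g x y \<in> Ob \<longleftrightarrow> y \<in> Ob"
    and uv: "u \<in> X" "v \<in> X" "u \<noteq> v" "u \<in> Ob \<longleftrightarrow> v \<in> Ob"
    and ab: "a \<in> X" "b \<in> X" "a \<in> Ob" "b \<notin> Ob"
  shows False
proof -
  have "(\<forall>x\<in>X. \<forall>y\<in>X. (x \<in> Ob \<longleftrightarrow> y \<in> Ob) \<longrightarrow> x = y) \<or> (\<forall>x\<in>X. \<forall>y\<in>X. (x \<in> Ob \<longleftrightarrow> y \<in> Ob))"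
    by (rule cong_simple[OF fin sol simple, where E = "\<lambda>x y. (x \<in> Ob \<longleftrightarrow> y \<in> Ob)"])
      (use hs hg in auto)
  then show False using uv ab by blast
qed

lemma card_ge3:
  assumes "finite X" "simple_solution X s g" "\<not> prime (card X)"
  shows "card X \<ge> 3"
proof -
  obtain x y where "x \<in> X" "y \<in> X" "x \<noteq> y" using assms(2) unfolding simple_solution_def by blast
  then have "card {x, y} \<le> card X" using assms(1) by (intro card_mono) auto
  then have "card X \<ge> 2" using \<open>x \<noteq> y\<close> by simp
  moreover have "card X \<noteq> 2" using assms(3) by auto
  ultimately show ?thesis by linarith
qed

lemma const_sigma_False:
  assumes fin: "finite X" and sol: "ybe_solution X s g" and simple: "simple_solution X s g"
    and np: "\<not> prime (card X)" and x0: "x0 \<in> X"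
    and const: "\<And>x y. x \<in> X \<Longrightarrow> y \<in> X \<Longrightarrow> s x y = s x0 y"
  shows False
proof -
  define f where "f = s x0"
  note sc = sol_closed[OF sol]
  have bijf: "bij_betw f X X" using sol x0 unfolding ybe_solution_def f_def by blast
  then have injf: "inj_on f X" and fX: "f ` X \<subseteq> X" unfolding bij_betw_def by auto
  have sf: "s x y = f y" if "x \<in> X" "y \<in> X" for x y using const that f_def by simp
  have fg: "f (g x y) = y" if "x \<in> X" "y \<in> X" for x y
    using sol_inv(1)[OF sol that(2) that(1)] sf sc that by metis
  have c3: "card X \<ge> 3" using card_ge3 fin simple np by blast
  show False
  proof (cases "\<forall>y\<in>X. f y = y")
    case True
    have "card (X - {x0}) \<ge> 2" using c3 x0 fin by simp
    then obtain u v where uv: "u \<in> X - {x0}" "v \<in> X - {x0}" "u \<noteq> v"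
    proof -
      obtain B where "B \<subseteq> X - {x0}" "card B = 2" using obtain_subset_with_card_n[OF \<open>card (X - {x0}) \<ge> 2\<close>] by blast
      then show ?thesis using that by (auto simp: card_2_iff)
    qed
    have gid: "g x y = y" if "x \<in> X" "y \<in> X" for x y using fg[OF that] True sc that by metis
    show False
      by (rule invset_contra[OF fin sol simple, where Ob = "{x0}" and u = u and v = v and a = x0 and b = u])
        (use uv x0 True sf gid in auto)
  next
    case False
    then obtain x1 where x1: "x1 \<in> X" "f x1 \<noteq> x1" by blast
    define Ob where "Ob = range (\<lambda>k. (f ^^ k) x1)"
    have OX: "Ob \<subseteq> X" unfolding Ob_def using fp_in[OF fX x1(1)] by auto
    obtain p0 where p0: "p0 > 0" "(f ^^ p0) x1 = x1" using fp_period[OF fin injf fX x1(1)] by blast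
    have fO: "f y \<in> Ob \<longleftrightarrow> y \<in> Ob" if "y \<in> X" for y
    proof
      assume "y \<in> Ob" then obtain k where "y = (f ^^ k) x1" unfolding Ob_def by auto
      then have "f y = (f ^^ Suc k) x1" by simp
      then show "f y \<in> Ob" unfolding Ob_def by blast
    next
      assume "f y \<in> Ob" then obtain k where k: "f y = (f ^^ k) x1" unfolding Ob_def by auto
      have "f y = (f ^^ (k + p0)) x1" using k p0 by (simp add: funpow_add)
      also have "\<dots> = f ((f ^^ (k + p0 - 1)) x1)" using p0
        by (metis Suc_pred' add_gr_0 funpow.simps(2) o_apply)
      finally have "y = (f ^^ (k + p0 - 1)) x1"
        using injf that fp_in[OF fX x1(1)] by (meson inj_onD)
      then show "y \<in> Ob" unfolding Ob_def by blast
    qed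
    have gO: "g x y \<in> Ob \<longleftrightarrow> y \<in> Ob" if "x \<in> X" "y \<in> X" for x y
      using fO[of "g x y"] fg[OF that] sc(2)[OF that] by simp
    show False
    proof (cases "Ob = X")
      case False
      then obtain b where b: "b \<in> X" "b \<notin> Ob" using OX by blast
      have "x1 \<in> Ob" unfolding Ob_def using rangeI[of "\<lambda>k. (f^^k) x1" 0] by simp
      have "f x1 \<in> Ob" unfolding Ob_def using rangeI[of "\<lambda>k. (f^^k) x1" 1] by simp
      show False
        by (rule invset_contra[OF fin sol simple, where Ob = Ob and u = x1 and v = "f x1" and a = x1 and b = b])
          (use x1 b fO sf gO sc \<open>x1 \<in> Ob\<close> \<open>f x1 \<in> Ob\<close> fX in \<open>auto simp: image_subset_iff\<close>)
    next
      case True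
      define p where "p = (LEAST p. p > 0 \<and> (f ^^ p) x1 = x1)"
      have pp: "p > 0" "(f ^^ p) x1 = x1" using LeastI_ex[of "\<lambda>p. p > 0 \<and> (f ^^ p) x1 = x1"] p0
        unfolding p_def by blast+
      have pmin: "(f ^^ q) x1 \<noteq> x1" if "0 < q" "q < p" for q
        using not_less_Least[of q "\<lambda>p. p > 0 \<and> (f ^^ p) x1 = x1"] that unfolding p_def by blast
      have dist: "i = j" if "i < p" "j < p" "(f ^^ i) x1 = (f ^^ j) x1" for i j
      proof (rule ccontr)
        assume "i \<noteq> j"
        then consider "i < j" | "j < i" by linarith
        then show False
        proof cases
          case 1
          then show False using fp_cancel[OF injf fX x1(1) that(3)] pmin[of "j - i"] that by auto
        next
          case 2
          then show False using fp_cancel[OF injf fX x1(1) that(3)[symmetric]] pmin[of "i - j"] that by auto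
        qed
      qed
      have Xeq: "X = (\<lambda>k. (f ^^ k) x1) ` {..<p}"
      proof
        show "X \<subseteq> (\<lambda>k. (f ^^ k) x1) ` {..<p}"
        proof
          fix u assume "u \<in> X"
          then obtain k where "u = (f ^^ k) x1" using True unfolding Ob_def by auto
          then have "u = (f ^^ (k mod p)) x1" using fp_mod[OF pp(2)] by simp
          then show "u \<in> (\<lambda>k. (f ^^ k) x1) ` {..<p}" using pp(1) by auto
        qed
      qed (use fp_in[OF fX x1(1)] in auto)
      have "inj_on (\<lambda>k. (f ^^ k) x1) {..<p}" using dist by (auto simp: inj_on_def)
      then have cardp: "card X = p" using Xeq by (simp add: card_image)
      have lab: "\<exists>i. u = (f ^^ i) x1" if "u \<in> X" for u using that True unfolding Ob_def by auto
      have modp: "i mod p = j mod p" if "(f ^^ i) x1 = (f ^^ j) x1" for i j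
        using dist[of "i mod p" "j mod p"] that fp_mod[OF pp(2)] pp(1) by simp
      obtain d where d: "d dvd p" "d \<noteq> 1" "d \<noteq> p"
        using np c3 cardp unfolding prime_nat_iff by auto
      have d1: "d > 1" "d < p" using d pp(1)
        by (metis One_nat_def dvd_0_left_iff less_one linorder_neqE_nat not_gr0, meson d dvd_imp_le le_neq_implies_less pp(1))
      have modd: "i mod d = j mod d" if "(f ^^ i) x1 = (f ^^ j) x1" for i j
        using modp[OF that] d(1) by (metis mod_mod_cancel)
      define E where "E = (\<lambda>u v. \<exists>i j. u = (f ^^ i) x1 \<and> v = (f ^^ j) x1 \<and> i mod d = j mod d)"
      have sucmod: "k mod d = k' mod d" if "Suc k mod d = Suc k' mod d" for k k'
      proof -
        have "k mod d = (Suc k + (d - 1)) mod d" using d1 by simp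
        also have "\<dots> = ((Suc k mod d) + (d - 1)) mod d" by (simp add: mod_add_left_eq)
        also have "\<dots> = ((Suc k' mod d) + (d - 1)) mod d" using that by simp
        also have "\<dots> = (Suc k' + (d - 1)) mod d" by (simp add: mod_add_left_eq)
        also have "\<dots> = k' mod d" using d1 by simp
        finally show ?thesis .
      qed
      have Ecs: "E (f y) (f y')" if h: "E y y'" for y y'
      proof -
        obtain i j where ij: "y = (f ^^ i) x1" "y' = (f ^^ j) x1" "i mod d = j mod d" using h E_def by auto
        then have "f y = (f ^^ Suc i) x1" "f y' = (f ^^ Suc j) x1" by simp_all
        moreover have "Suc i mod d = Suc j mod d" using ij(3) by (metis mod_Suc_eq)
        ultimately show ?thesis unfolding E_def by blast
      qed
      have Ecg: "E (g x y) (g x' y')" if h: "E y y'" "x \<in> X" "y \<in> X" "x' \<in> X" "y' \<in> X" for x y x' y'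
      proof -
        obtain i j where ij: "y = (f ^^ i) x1" "y' = (f ^^ j) x1" "i mod d = j mod d" using h E_def by auto
        obtain k where k: "g x y = (f ^^ k) x1" using lab[OF sc(2)[OF h(2) h(3)]] by blast
        obtain k' where k': "g x' y' = (f ^^ k') x1" using lab[OF sc(2)[OF h(4) h(5)]] by blast
        have "(f ^^ Suc k) x1 = (f ^^ i) x1" using fg[of x y] h k ij by simp
        then have "Suc k mod d = i mod d" using modd by blast
        moreover have "(f ^^ Suc k') x1 = (f ^^ j) x1" using fg[of x' y'] h k' ij by simp
        then have "Suc k' mod d = j mod d" using modd by blast
        ultimately have "Suc k mod d = Suc k' mod d" using ij(3) by argo
        then have "k mod d = k' mod d" by (rule sucmod)
        then show ?thesis unfolding E_def using k k' by blast
      qed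
      have "(\<forall>x\<in>X. \<forall>y\<in>X. E x y \<longrightarrow> x = y) \<or> (\<forall>x\<in>X. \<forall>y\<in>X. E x y)"
      proof (rule cong_simple[OF fin sol simple])
        show "E x x" if "x \<in> X" for x using lab[OF that] unfolding E_def by blast
        show "E y x" if "E x y" for x y using that unfolding E_def by metis
        show "E x z" if h: "x \<in> X" "y \<in> X" "z \<in> X" "E x y" "E y z" for x y z
        proof -
          obtain i j where "x = (f ^^ i) x1" "y = (f ^^ j) x1" "i mod d = j mod d" using h E_def by auto
          moreover obtain j' k where "y = (f ^^ j') x1" "z = (f ^^ k) x1" "j' mod d = k mod d"
            using h E_def by auto
          ultimately show ?thesis unfolding E_def using modd by metis
        qed
        show "E (s x y) (s x' y')" if "x \<in> X" "x' \<in> X" "y \<in> X" "y' \<in> X" "E x x'" "E y y'" for x x' y y'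
          using Ecs[OF that(6)] sf that by simp
        show "E (g x y) (g x' y')" if "x \<in> X" "x' \<in> X" "y \<in> X" "y' \<in> X" "E x x'" "E y y'" for x x' y y'
          using Ecg[OF that(6)] that by simp
      qed
      moreover have "E x1 ((f ^^ d) x1)" unfolding E_def by (metis funpow_0 mod_self mod_0)
      moreover have "(f ^^ d) x1 \<noteq> x1" using pmin d1 by simp
      moreover have "\<not> E x1 (f x1)"
      proof
        assume "E x1 (f x1)"
        then obtain i j where ij: "x1 = (f ^^ i) x1" "f x1 = (f ^^ j) x1" "i mod d = j mod d" using E_def by auto
        have "i mod d = 0 mod d" using modd[of i 0] ij by simp
        moreover have "j mod d = 1 mod d" using modd[of j 1] ij by simp
        ultimately show False using ij d1 by simp
      qed
      moreover have "(f ^^ d) x1 \<in> X" "f x1 \<in> X" using fp_in[OF fX x1(1)] fX x1(1) by auto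
      ultimately show False using x1(1) by metis
    qed
  qed
qed




locale lbr =
  fixes B :: "'b set" and add mul :: "'b \<Rightarrow> 'b \<Rightarrow> 'b" and z :: 'b
  assumes lb: "left_brace B add mul z"
begin

abbreviation "AG \<equiv> add_grp B add z"
abbreviation "MG \<equiv> mul_grp B mul z"
abbreviation "nb \<equiv> b_neg B add z"
abbreviation "lam \<equiv> b_lambda B add mul z"
abbreviation "minv \<equiv> m_inv MG"

lemma AG_simps[simp]: "carrier AG = B" "monoid.mult AG = add" "one AG = z"
  by (simp_all add: add_grp_def)
lemma MG_simps[simp]: "carrier MG = B" "monoid.mult MG = mul" "one MG = z"
  by (simp_all add: mul_grp_def)

lemma AG: "comm_group AG" and MG: "group MG" using lb unfolding left_brace_def by auto

sublocale A: comm_group AG by (rule AG)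
sublocale M: group MG by (rule MG)

lemma ax: "a \<in> B \<Longrightarrow> b \<in> B \<Longrightarrow> c \<in> B \<Longrightarrow> add (mul a (add b c)) a = add (mul a b) (mul a c)"
  using lb unfolding left_brace_def by auto

lemma add_closed[simp,intro]: "a \<in> B \<Longrightarrow> b \<in> B \<Longrightarrow> add a b \<in> B"
  using A.m_closed by simp
lemma mul_closed[simp,intro]: "a \<in> B \<Longrightarrow> b \<in> B \<Longrightarrow> mul a b \<in> B"
  using M.m_closed by simp
lemma nb_closed[simp,intro]: "a \<in> B \<Longrightarrow> nb a \<in> B"
  unfolding b_neg_def using A.inv_closed by simp
lemma minv_closed[simp,intro]: "a \<in> B \<Longrightarrow> minv a \<in> B"
  using M.inv_closed by simp
lemma z_in[simp,intro]: "z \<in> B" using A.one_closed by simp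

lemma add_assoc: "a \<in> B \<Longrightarrow> b \<in> B \<Longrightarrow> c \<in> B \<Longrightarrow> add (add a b) c = add a (add b c)"
  using A.m_assoc by simp
lemma add_comm: "a \<in> B \<Longrightarrow> b \<in> B \<Longrightarrow> add a b = add b a"
  using A.m_comm by simp
lemma add_lcomm: "a \<in> B \<Longrightarrow> b \<in> B \<Longrightarrow> c \<in> B \<Longrightarrow> add a (add b c) = add b (add a c)"
  using A.m_lcomm by simp
lemmas add_ac = add_assoc add_comm add_lcomm

lemma add_z[simp]: "a \<in> B \<Longrightarrow> add a z = a" "a \<in> B \<Longrightarrow> add z a = a"
  using A.r_one A.l_one by simp_all
lemma nb_cancel[simp]: "a \<in> B \<Longrightarrow> add a (nb a) = z" "a \<in> B \<Longrightarrow> add (nb a) a = z"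
  unfolding b_neg_def using A.r_inv A.l_inv by simp_all
lemma nb_cancel2[simp]: "a \<in> B \<Longrightarrow> c \<in> B \<Longrightarrow> add a (add (nb a) c) = c"
  "a \<in> B \<Longrightarrow> c \<in> B \<Longrightarrow> add (nb a) (add a c) = c"
  by (simp_all flip: add_assoc)
lemma nb_cancel3[simp]: "a \<in> B \<Longrightarrow> b \<in> B \<Longrightarrow> c \<in> B \<Longrightarrow> add a (add b (add (nb a) c)) = add b c"
  "a \<in> B \<Longrightarrow> b \<in> B \<Longrightarrow> c \<in> B \<Longrightarrow> add (nb a) (add b (add a c)) = add b c"
  "a \<in> B \<Longrightarrow> b \<in> B \<Longrightarrow> add a (add b (nb a)) = b"
  "a \<in> B \<Longrightarrow> b \<in> B \<Longrightarrow> add (nb a) (add b a) = b"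
  using add_lcomm[of a b "add (nb a) c"] add_lcomm[of "nb a" b "add a c"]
    add_lcomm[of a b "nb a"] add_lcomm[of "nb a" b a] by simp_all
lemma nb_nb[simp]: "a \<in> B \<Longrightarrow> nb (nb a) = a"
  unfolding b_neg_def using A.inv_inv by simp
lemma nb_add: "a \<in> B \<Longrightarrow> b \<in> B \<Longrightarrow> nb (add a b) = add (nb a) (nb b)"
  unfolding b_neg_def using A.inv_mult by simp
lemma nb_z[simp]: "nb z = z"
  unfolding b_neg_def using A.inv_one by simp
lemma add_left_cancel: "a \<in> B \<Longrightarrow> b \<in> B \<Longrightarrow> c \<in> B \<Longrightarrow> add a b = add a c \<longleftrightarrow> b = c"
  using A.Units_l_cancel[of a b c] A.Units_eq by simp
lemma add_eq_z: "a \<in> B \<Longrightarrow> b \<in> B \<Longrightarrow> add a b = z \<longleftrightarrow> b = nb a"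
  by (metis add_left_cancel nb_cancel(1) nb_closed)

lemma mul_assoc: "a \<in> B \<Longrightarrow> b \<in> B \<Longrightarrow> c \<in> B \<Longrightarrow> mul (mul a b) c = mul a (mul b c)"
  using M.m_assoc by simp
lemma mul_z[simp]: "a \<in> B \<Longrightarrow> mul a z = a" "a \<in> B \<Longrightarrow> mul z a = a"
  using M.r_one M.l_one by simp_all
lemma minv_cancel[simp]: "a \<in> B \<Longrightarrow> mul a (minv a) = z" "a \<in> B \<Longrightarrow> mul (minv a) a = z"
  using M.r_inv M.l_inv by simp_all

lemma lam_def': "lam a b = add (nb a) (mul a b)" unfolding b_lambda_def by simp

lemma lam_closed[simp,intro]: "a \<in> B \<Longrightarrow> b \<in> B \<Longrightarrow> lam a b \<in> B"
  unfolding lam_def' by simp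

lemma mul_eq: "a \<in> B \<Longrightarrow> b \<in> B \<Longrightarrow> mul a b = add a (lam a b)"
  unfolding lam_def' by simp

lemma lam_add: assumes "a \<in> B" "b \<in> B" "c \<in> B"
  shows "lam a (add b c) = add (lam a b) (lam a c)"
proof -
  have "add (mul a (add b c)) a = add (mul a b) (mul a c)" using ax assms by blast
  then have "mul a (add b c) = add (add (mul a b) (mul a c)) (nb a)"
    using assms by (metis A.inv_solve_right' AG_simps b_neg_def mul_closed add_closed)
  then show ?thesis unfolding lam_def' using assms by (simp add: add_ac)
qed

lemma lam_z[simp]: "a \<in> B \<Longrightarrow> lam a z = z"
  unfolding lam_def' by simp

lemma lam_nb: assumes "a \<in> B" "b \<in> B" shows "lam a (nb b) = nb (lam a b)"
proof -
  have "add (lam a b) (lam a (nb b)) = z" using lam_add[of a b "nb b"] assms by simp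
  then show ?thesis using assms by (simp add: add_eq_z)
qed

lemma lam_one[simp]: "b \<in> B \<Longrightarrow> lam z b = b"
  unfolding lam_def' by simp

lemma lam_mul: assumes "a \<in> B" "b \<in> B" "c \<in> B"
  shows "lam (mul a b) c = lam a (lam b c)"
proof -
  have "lam a (lam b c) = add (nb (lam a b)) (lam a (mul b c))"
    using assms by (simp add: lam_def'[of b c] lam_add lam_nb)
  also have "\<dots> = add (nb (mul a b)) (mul a (mul b c))"
    using assms by (simp add: lam_def' nb_add add_ac)
  finally show ?thesis using assms by (simp add: lam_def' mul_assoc)
qed

lemma lam_inv[simp]: assumes "a \<in> B" "c \<in> B"
  shows "lam (minv a) (lam a c) = c" "lam a (lam (minv a) c) = c"
  using assms by (simp_all flip: lam_mul)

lemma lam_inj: "a \<in> B \<Longrightarrow> b \<in> B \<Longrightarrow> c \<in> B \<Longrightarrow> lam a b = lam a c \<Longrightarrow> b = c"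
  by (metis lam_inv(1))

lemma mul_add: assumes "c \<in> B" "b \<in> B" "e \<in> B"
  shows "mul c (add b e) = add (mul c b) (lam c e)"
  using assms by (simp add: mul_eq[of c] lam_add add_ac)

section \<open>Ideals\<close>

lemma ideal_normal: "b_ideal B add mul z J \<Longrightarrow> J \<lhd> MG"
  unfolding b_ideal_def by blast
lemma ideal_lam: "b_ideal B add mul z J \<Longrightarrow> c \<in> B \<Longrightarrow> j \<in> J \<Longrightarrow> lam c j \<in> J"
  unfolding b_ideal_def by blast
lemma ideal_sub: "b_ideal B add mul z J \<Longrightarrow> J \<subseteq> B"
  using ideal_normal normal_imp_subgroup subgroup.subset by fastforce
lemma ideal_in: "b_ideal B add mul z J \<Longrightarrow> j \<in> J \<Longrightarrow> j \<in> B"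
  using ideal_sub by blast
lemma ideal_z: "b_ideal B add mul z J \<Longrightarrow> z \<in> J"
  using ideal_normal normal_imp_subgroup subgroup.one_closed by fastforce
lemma ideal_mul: "b_ideal B add mul z J \<Longrightarrow> a \<in> J \<Longrightarrow> b \<in> J \<Longrightarrow> mul a b \<in> J"
  using ideal_normal normal_imp_subgroup subgroup.m_closed by fastforce
lemma ideal_minv: "b_ideal B add mul z J \<Longrightarrow> a \<in> J \<Longrightarrow> minv a \<in> J"
  using ideal_normal normal_imp_subgroup subgroup.m_inv_closed by fastforce
lemma ideal_conj: assumes "b_ideal B add mul z J" "c \<in> B" "j \<in> J"
  shows "mul (mul c j) (minv c) \<in> J" "mul (mul (minv c) j) c \<in> J"
proof -
  have h: "\<forall>x\<in>B. \<forall>h\<in>J. mul (mul x h) (minv x) \<in> J"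
    using ideal_normal[OF assms(1)] M.normal_inv_iff by simp
  show "mul (mul c j) (minv c) \<in> J" using h assms by blast
  show "mul (mul (minv c) j) c \<in> J" using h[rule_format, of "minv c" j] assms by simp
qed
lemma ideal_add: assumes "b_ideal B add mul z J" "a \<in> J" "b \<in> J"
  shows "add a b \<in> J"
proof -
  have B: "a \<in> B" "b \<in> B" using assms ideal_in by auto
  have "add a b = mul a (lam (minv a) b)" using B by (simp add: mul_eq)
  moreover have "lam (minv a) b \<in> J" using assms B ideal_lam by auto
  ultimately show ?thesis using ideal_mul assms by simp
qed
lemma lam_minv_self: assumes "a \<in> B" shows "lam a (minv a) = nb a"
proof -
  have "add a (lam a (minv a)) = z" using assms mul_eq[of a "minv a"] by simp
  then show ?thesis using assms by (simp add: add_eq_z)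
qed
lemma minv_eq_lam: assumes "a \<in> B" shows "minv a = lam (minv a) (nb a)"
  using lam_minv_self[OF assms] assms by (metis lam_inv(1) minv_closed)
lemma ideal_nb: assumes "b_ideal B add mul z J" "a \<in> J"
  shows "nb a \<in> J"
  using lam_minv_self[of a] ideal_lam[OF assms(1), of a "minv a"] ideal_minv[OF assms] ideal_in[OF assms]
  by simp
lemma ideal_star: assumes "b_ideal B add mul z J" "j \<in> J" "c \<in> B"
  shows "add (lam j c) (nb c) \<in> J"
proof -
  have jB: "j \<in> B" using assms ideal_in by auto
  define j' where "j' = mul (mul (minv c) j) c"
  have j': "j' \<in> J" "j' \<in> B" using ideal_conj[OF assms(1,3,2)] ideal_in[OF assms(1)] unfolding j'_def by auto
  have "mul j c = mul c j'" unfolding j'_def using jB assms(3)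
    by (simp flip: mul_assoc)
  then have "lam j c = add (nb j) (mul c j')" using jB j' assms(3) by (simp add: lam_def'[of j c])
  then have "lam j c = add (nb j) (add c (lam c j'))" using jB j' assms(3) mul_eq[of c j'] by simp
  then have "add (lam j c) (nb c) = add (nb j) (lam c j')" using jB j' assms(3) by (simp add: add_ac)
  moreover have "nb j \<in> J" "lam c j' \<in> J" using ideal_nb assms ideal_lam j' by auto
  ultimately show ?thesis using ideal_add assms(1) by simp
qed
lemma ideal_subgroupA: assumes "b_ideal B add mul z J" shows "subgroup J AG"
  using assms ideal_sub ideal_z ideal_add ideal_nb
  by (intro A.subgroupI) (auto simp: b_neg_def)

lemma ideal_intro:
  assumes sg: "subgroup J AG"
    and lc: "\<And>c j. c \<in> B \<Longrightarrow> j \<in> J \<Longrightarrow> lam c j \<in> J"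
    and st: "\<And>j c. j \<in> J \<Longrightarrow> c \<in> B \<Longrightarrow> add (lam j c) (nb c) \<in> J"
  shows "b_ideal B add mul z J"
proof -
  have JB: "J \<subseteq> B" using sg subgroup.subset by fastforce
  have zJ: "z \<in> J" using sg subgroup.one_closed by fastforce
  have addJ: "add a b \<in> J" if "a \<in> J" "b \<in> J" for a b using sg subgroup.m_closed that by fastforce
  have nbJ: "nb a \<in> J" if "a \<in> J" for a using sg subgroup.m_inv_closed that unfolding b_neg_def by fastforce
  have mulJ: "mul a b \<in> J" if "a \<in> J" "b \<in> J" for a b
  proof -
    have "a \<in> B" "b \<in> B" using that JB by auto
    then have "mul a b = add a (lam a b)" by (rule mul_eq)
    then show ?thesis using addJ lc that \<open>a \<in> B\<close> by simp
  qed
  have minvJ: "minv a \<in> J" if "a \<in> J" for a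
    using that JB minv_eq_lam[of a] lc nbJ by (metis minv_closed subsetD)
  have sgM: "subgroup J MG"
    using JB zJ mulJ minvJ by (intro M.subgroupI) auto
  have conj: "mul (mul c j) (minv c) \<in> J" if "c \<in> B" "j \<in> J" for c j
  proof -
    define c' where "c' = minv c"
    have c': "c' \<in> B" using that c'_def by simp
    have jB: "j \<in> B" using that JB by auto
    define j2 where "j2 = add j (add (lam j c') (nb c'))"
    have j2: "j2 \<in> J" "j2 \<in> B" using that st c' addJ JB unfolding j2_def by auto
    have "mul j c' = add c' j2" unfolding j2_def using jB c' by (simp add: mul_eq add_ac)
    then have "mul (mul c j) c' = mul c (add c' j2)" using that jB c' by (simp add: mul_assoc)
    also have "\<dots> = lam c j2" using that c' j2 by (simp add: mul_add c'_def)
    finally show ?thesis using lc that j2 c'_def by simp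
  qed
  have "J \<lhd> MG" using sgM conj M.normal_inv_iff by simp
  moreover have "\<forall>a\<in>B. lam a ` J \<subseteq> J" using lc by blast
  ultimately show ?thesis unfolding b_ideal_def by (rule conjI)
qed

definition cgr :: "'b set \<Rightarrow> 'b \<Rightarrow> 'b \<Rightarrow> bool" where
  "cgr J a b \<longleftrightarrow> add a (nb b) \<in> J"

lemma cgr_C1:
  assumes J: "b_ideal B add mul z J" and B: "a \<in> B" "a' \<in> B" "b \<in> B" "b' \<in> B"
    and h: "cgr J a a'" "cgr J b b'"
  shows "cgr J (lam a b) (lam a' b')"
proof -
  have JB: "\<And>j. j \<in> J \<Longrightarrow> j \<in> B" using ideal_in[OF J] by blast
  have t1: "add (lam a b) (nb (lam a b')) \<in> J"
  proof -
    have "add (lam a b) (nb (lam a b')) = lam a (add b (nb b'))" using B by (simp add: lam_add lam_nb)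
    then show ?thesis using ideal_lam[OF J] h B unfolding cgr_def by simp
  qed
  define k where "k = add a' (nb a)"
  have "k = nb (add a (nb a'))" unfolding k_def using B by (simp add: nb_add add_ac)
  then have k: "k \<in> J" "k \<in> B" using h ideal_nb[OF J] B unfolding cgr_def by auto
  define j where "j = lam (minv a) k"
  have j: "j \<in> J" "j \<in> B" unfolding j_def using ideal_lam[OF J] k B by auto
  have a': "a' = mul a j" unfolding j_def k_def using B by (simp add: mul_eq add_ac)
  define t where "t = add (lam j b') (nb b')"
  have t: "t \<in> J" "t \<in> B" unfolding t_def using ideal_star[OF J j(1)] B j by auto
  have "lam a' b' = lam a (add b' t)" unfolding a' t_def using B j by (simp add: lam_mul add_ac)
  also have "\<dots> = add (lam a b') (lam a t)" using B t by (simp add: lam_add)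
  finally have "add (lam a b') (nb (lam a' b')) = nb (lam a t)" using B t by (simp add: nb_add add_ac)
  moreover have "nb (lam a t) \<in> J" using ideal_nb[OF J] ideal_lam[OF J] B t by auto
  ultimately have t2: "add (lam a b') (nb (lam a' b')) \<in> J" by simp
  have "add (lam a b) (nb (lam a' b')) = add (add (lam a b) (nb (lam a b'))) (add (lam a b') (nb (lam a' b')))"
    using B by (simp add: add_ac)
  then show ?thesis unfolding cgr_def using ideal_add[OF J t1 t2] by simp
qed

lemma cgr_C2:
  assumes J: "b_ideal B add mul z J" and B: "c \<in> B" "c' \<in> B" "u \<in> B" "u' \<in> B"
    and h: "cgr J c c'" "cgr J (lam c u) (lam c' u')"
  shows "cgr J u u'"
proof -
  have "cgr J u' u'" unfolding cgr_def using ideal_z[OF J] B by simp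
  then have "cgr J (lam c u') (lam c' u')" using cgr_C1[OF J] B h by blast
  then have x2: "add (lam c u') (nb (lam c' u')) \<in> J" unfolding cgr_def .
  have x1: "add (lam c u) (nb (lam c' u')) \<in> J" using h(2) unfolding cgr_def .
  have "add (lam c u) (nb (lam c u')) = add (add (lam c u) (nb (lam c' u'))) (nb (add (lam c u') (nb (lam c' u'))))"
    using B by (simp add: nb_add add_ac)
  then have "add (lam c u) (nb (lam c u')) \<in> J"
    using ideal_add[OF J x1 ideal_nb[OF J x2]] by simp
  then have "lam c (add u (nb u')) \<in> J" using B by (simp add: lam_add lam_nb)
  then have "lam (minv c) (lam c (add u (nb u'))) \<in> J" using ideal_lam[OF J, of "minv c"] B by blast
  then show ?thesis using B unfolding cgr_def by simp
qed

end



locale setting =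
  fixes X :: "'a set" and s g :: "'a \<Rightarrow> 'a \<Rightarrow> 'a"
    and add :: "('a \<Rightarrow> 'a) \<Rightarrow> ('a \<Rightarrow> 'a) \<Rightarrow> ('a \<Rightarrow> 'a)"
  assumes fin: "finite X"
    and sol: "ybe_solution X s g"
    and simple: "simple_solution X s g"
    and np: "\<not> prime (card X)"
    and nat: "natural_brace_add X s add"
begin

abbreviation "G \<equiv> perm_group X s"
abbreviation "mul \<equiv> monoid.mult (BijGroup X)"
abbreviation "e \<equiv> one (BijGroup X)"
abbreviation "\<sigma> \<equiv> sig X s"

sublocale L: lbr G add mul e
  using nat unfolding natural_brace_add_def by unfold_locales blast

lemma natlam: "x \<in> X \<Longrightarrow> y \<in> X \<Longrightarrow> L.lam (\<sigma> x) (\<sigma> y) = \<sigma> (s x y)"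
  using nat unfolding natural_brace_add_def by blast

interpretation BG: group "BijGroup X" by (rule group_BijGroup)

lemma sc: "x \<in> X \<Longrightarrow> y \<in> X \<Longrightarrow> s x y \<in> X" "x \<in> X \<Longrightarrow> y \<in> X \<Longrightarrow> g x y \<in> X"
  using sol_closed[OF sol] by auto

lemma sig_Bij: "x \<in> X \<Longrightarrow> \<sigma> x \<in> Bij X"
  using sol unfolding ybe_solution_def sig_def Bij_def
  by (auto simp: bij_betw_def inj_on_def)

lemma sig_app: "y \<in> X \<Longrightarrow> \<sigma> x y = s x y"
  unfolding sig_def by simp

lemma sigs_sub: "\<sigma> ` X \<subseteq> carrier (BijGroup X)"
  using sig_Bij by (auto simp: BijGroup_def)

lemma sig_G[simp, intro]: "x \<in> X \<Longrightarrow> \<sigma> x \<in> G"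
  unfolding perm_group_def by (rule generate.incl) simp

lemma G_sub: "G \<subseteq> Bij X"
  using BG.generate_incl[OF sigs_sub] unfolding perm_group_def by (simp add: BijGroup_def)

lemma G_subgroup: "subgroup G (BijGroup X)"
  unfolding perm_group_def by (rule BG.generate_is_subgroup[OF sigs_sub])

lemma mul_app: "a \<in> G \<Longrightarrow> b \<in> G \<Longrightarrow> y \<in> X \<Longrightarrow> mul a b y = a (b y)"
  using G_sub by (auto simp: BijGroup_def compose_def)

lemma e_app: "y \<in> X \<Longrightarrow> e y = y"
  by (simp add: BijGroup_def)

lemma G_app: "a \<in> G \<Longrightarrow> y \<in> X \<Longrightarrow> a y \<in> X"
  using G_sub Bij_imp_funcset by blast

lemma G_ext: assumes "a \<in> G" "\<And>y. y \<in> X \<Longrightarrow> a y = y" shows "a = e"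
proof -
  have "a \<in> extensional X" using assms G_sub Bij_imp_extensional by blast
  then show ?thesis using assms by (auto simp: BijGroup_def extensional_def)
qed

lemma inv_eq: assumes "h \<in> G" shows "inv\<^bsub>BijGroup X\<^esub> h = L.minv h"
proof -
  have hc: "h \<in> carrier (BijGroup X)" using assms G_sub by (auto simp: BijGroup_def)
  have "inv\<^bsub>BijGroup X\<^esub> h \<in> G"
    using assms BG.generate_m_inv_closed[OF sigs_sub] unfolding perm_group_def by simp
  moreover have "mul (inv\<^bsub>BijGroup X\<^esub> h) h = e" using hc by simp
  ultimately show ?thesis using L.M.inv_equality[of "inv\<^bsub>BijGroup X\<^esub> h" h] assms by simp
qed

lemma minv_app: assumes "h \<in> G" "y \<in> X" shows "h (L.minv h y) = y"
  using mul_app[of h "L.minv h" y] assms L.minv_cancel(1)[of h] e_app by simp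

lemma lamsig': assumes "a \<in> G" shows "\<forall>y\<in>X. L.lam a (\<sigma> y) = \<sigma> (a y)"
proof -
  have "a \<in> generate (BijGroup X) (\<sigma> ` X)" using assms unfolding perm_group_def .
  then show ?thesis
proof (induction rule: generate.induct)
  case one
  then show ?case using e_app by simp
next
  case (incl h)
  then obtain x where "x \<in> X" "h = \<sigma> x" by auto
  then show ?case using natlam sig_app by simp
next
  case (inv h)
  then obtain x where x: "x \<in> X" "h = \<sigma> x" by auto
  then have hG: "h \<in> G" by simp
  have iv: "inv\<^bsub>BijGroup X\<^esub> h = L.minv h" using inv_eq[OF hG] .
  show ?case
  proof
    fix y assume y: "y \<in> X"
    define w where "w = L.minv h y"
    have w: "w \<in> X" "h w = y" using G_app[of "L.minv h" y] hG y minv_app[OF hG y] by (auto simp: w_def)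
    have "L.lam h (\<sigma> w) = \<sigma> y" using natlam x w sig_app by simp
    then have "L.lam (L.minv h) (\<sigma> y) = \<sigma> w" using hG w L.lam_inv(1)[of h "\<sigma> w"] by simp
    then show "L.lam (inv\<^bsub>BijGroup X\<^esub> h) (\<sigma> y) = \<sigma> ((inv\<^bsub>BijGroup X\<^esub> h) y)" using iv w_def by simp
  qed
next
  case (eng h1 h2)
  have G: "h1 \<in> G" "h2 \<in> G" using eng.hyps unfolding perm_group_def by auto
  show ?case
  proof
    fix y assume y: "y \<in> X"
    have "L.lam (mul h1 h2) (\<sigma> y) = L.lam h1 (L.lam h2 (\<sigma> y))" using G y by (simp add: L.lam_mul)
    also have "\<dots> = \<sigma> (h1 (h2 y))" using eng.IH y G G_app by simp
    finally show "L.lam (mul h1 h2) (\<sigma> y) = \<sigma> (mul h1 h2 y)" using mul_app G y by simp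
  qed
qed
qed

lemma lamsig: "a \<in> G \<Longrightarrow> y \<in> X \<Longrightarrow> L.lam a (\<sigma> y) = \<sigma> (a y)"
  using lamsig' by blast

lemma X_ne: "X \<noteq> {}" using sol unfolding ybe_solution_def by blast

lemma sig_inj: assumes "x \<in> X" "y \<in> X" "\<sigma> x = \<sigma> y" shows "x = y"
proof -
  define E where "E = (\<lambda>x y. \<sigma> x = \<sigma> y)"
  have "(\<forall>x\<in>X. \<forall>y\<in>X. E x y \<longrightarrow> x = y) \<or> (\<forall>x\<in>X. \<forall>y\<in>X. E x y)"
  proof (rule cong_simple[OF fin sol simple])
    show "E (s x y) (s x' y')" if "x \<in> X" "x' \<in> X" "y \<in> X" "y' \<in> X" "E x x'" "E y y'" for x x' y y'
      using that natlam[symmetric] unfolding E_def by metis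
    show "E (g x y) (g x' y')" if h: "x \<in> X" "x' \<in> X" "y \<in> X" "y' \<in> X" "E x x'" "E y y'" for x x' y y'
    proof -
      have 1: "\<sigma> y = L.lam (\<sigma> (s y x)) (\<sigma> (g x y))"
        using natlam sc h sol_inv(1)[OF sol, of y x] by simp
      have 2: "\<sigma> y' = L.lam (\<sigma> (s y' x')) (\<sigma> (g x' y'))"
        using natlam sc h sol_inv(1)[OF sol, of y' x'] by simp
      have 3: "\<sigma> (s y x) = \<sigma> (s y' x')" using h natlam[symmetric] unfolding E_def by metis
      show ?thesis unfolding E_def using 1 2 3 h(6) L.lam_inj sc h unfolding E_def
        by (metis sig_G)
    qed
  qed (auto simp: E_def)
  then show ?thesis
  proof
    assume "\<forall>x\<in>X. \<forall>y\<in>X. E x y"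
    then obtain x0 where "x0 \<in> X" "\<And>x. x \<in> X \<Longrightarrow> \<sigma> x = \<sigma> x0" using X_ne unfolding E_def by blast
    then have "\<And>x y. x \<in> X \<Longrightarrow> y \<in> X \<Longrightarrow> s x y = s x0 y" using sig_app by metis
    then show ?thesis using const_sigma_False[OF fin sol simple np \<open>x0 \<in> X\<close>] by blast
  qed (use assms E_def in blast)
qed

lemma cgr_refl: "b_ideal G add mul e J \<Longrightarrow> a \<in> G \<Longrightarrow> L.cgr J a a"
  unfolding L.cgr_def using L.ideal_z by simp
lemma cgr_sym: assumes "b_ideal G add mul e J" "a \<in> G" "b \<in> G" "L.cgr J a b" shows "L.cgr J b a"
proof -
  have "add b (L.nb a) = L.nb (add a (L.nb b))" using assms by (simp add: L.nb_add L.add_ac)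
  then show ?thesis using assms L.ideal_nb unfolding L.cgr_def by simp
qed
lemma cgr_trans: assumes "b_ideal G add mul e J" "a \<in> G" "b \<in> G" "c \<in> G" "L.cgr J a b" "L.cgr J b c"
  shows "L.cgr J a c"
proof -
  have "add a (L.nb c) = add (add a (L.nb b)) (add b (L.nb c))" using assms by (simp add: L.add_ac)
  then show ?thesis using assms L.ideal_add unfolding L.cgr_def by simp
qed

lemma ideal_sig_cong:
  assumes J: "b_ideal G add mul e J" and Jne: "J \<noteq> {e}"
  shows "\<forall>x\<in>X. \<forall>y\<in>X. L.cgr J (\<sigma> x) (\<sigma> y)"
proof -
  define E where "E = (\<lambda>x y. L.cgr J (\<sigma> x) (\<sigma> y))"
  have Ecs: "E (s x y) (s x' y')" if h: "x \<in> X" "x' \<in> X" "y \<in> X" "y' \<in> X" "E x x'" "E y y'" for x x' y y'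
    using L.cgr_C1[OF J, of "\<sigma> x" "\<sigma> x'" "\<sigma> y" "\<sigma> y'"] h natlam unfolding E_def by simp
  have "(\<forall>x\<in>X. \<forall>y\<in>X. E x y \<longrightarrow> x = y) \<or> (\<forall>x\<in>X. \<forall>y\<in>X. E x y)"
  proof (rule cong_simple[OF fin sol simple])
    show "E x x" if "x \<in> X" for x unfolding E_def using cgr_refl[OF J] that by simp
    show "E y x" if "x \<in> X" "y \<in> X" "E x y" for x y using cgr_sym[OF J] that unfolding E_def by simp
    show "E x z" if "x \<in> X" "y \<in> X" "z \<in> X" "E x y" "E y z" for x y z
      using cgr_trans[OF J, of "\<sigma> x" "\<sigma> y" "\<sigma> z"] that unfolding E_def by simp
    show "E (s x y) (s x' y')" if "x \<in> X" "x' \<in> X" "y \<in> X" "y' \<in> X" "E x x'" "E y y'" for x x' y y'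
      using Ecs that by blast
    show "E (g x y) (g x' y')" if h: "x \<in> X" "x' \<in> X" "y \<in> X" "y' \<in> X" "E x x'" "E y y'" for x x' y y'
    proof -
      have 1: "\<sigma> y = L.lam (\<sigma> (s y x)) (\<sigma> (g x y))"
        using natlam sc h sol_inv(1)[OF sol, of y x] by simp
      have 2: "\<sigma> y' = L.lam (\<sigma> (s y' x')) (\<sigma> (g x' y'))"
        using natlam sc h sol_inv(1)[OF sol, of y' x'] by simp
      have 3: "E (s y x) (s y' x')" using Ecs h by blast
      show ?thesis
        using L.cgr_C2[OF J, of "\<sigma> (s y x)" "\<sigma> (s y' x')" "\<sigma> (g x y)" "\<sigma> (g x' y')"] 1 2 3 h sc
        unfolding E_def by simp
    qed
  qed
  then show ?thesis
  proof
    assume disc: "\<forall>x\<in>X. \<forall>y\<in>X. E x y \<longrightarrow> x = y"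
    have "J \<subseteq> {e}"
    proof
      fix j assume j: "j \<in> J"
      have jG: "j \<in> G" using L.ideal_in[OF J j] .
      have "j y = y" if y: "y \<in> X" for y
      proof -
        have "E (j y) y" unfolding E_def L.cgr_def using lamsig[OF jG y] L.ideal_star[OF J j, of "\<sigma> y"] y
          by simp
        then show ?thesis using disc y G_app[OF jG y] by blast
      qed
      then show "j \<in> {e}" using G_ext[OF jG] by blast
    qed
    then show ?thesis using Jne L.ideal_z[OF J] by blast
  qed (simp add: E_def)
qed

lemma sig_diff_G: "x \<in> X \<Longrightarrow> y \<in> X \<Longrightarrow> add (\<sigma> x) (L.nb (\<sigma> y)) \<in> G"
  by simp

lemma socle: "b_socle G add mul = {e}"
proof
  show "{e} \<subseteq> b_socle G add mul" unfolding b_socle_def using L.z_in by auto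
  show "b_socle G add mul \<subseteq> {e}"
  proof
    fix a assume "a \<in> b_socle G add mul"
    then have aG: "a \<in> G" and h: "\<And>b. b \<in> G \<Longrightarrow> mul a b = add a b" unfolding b_socle_def by auto
    have "a y = y" if y: "y \<in> X" for y
    proof -
      have "L.lam a (\<sigma> y) = \<sigma> y" using h[of "\<sigma> y"] aG y by (simp add: L.lam_def')
      then have "\<sigma> (a y) = \<sigma> y" using lamsig[OF aG y] by simp
      then show ?thesis using sig_inj G_app[OF aG y] y by blast
    qed
    then show "a \<in> {e}" using G_ext[OF aG] by blast
  qed
qed

abbreviation "gens2 \<equiv> {b_star G add mul e a b | a b. a \<in> G \<and> b \<in> G}"
abbreviation "Sq \<equiv> b_square G add mul e"
abbreviation "gensD \<equiv> {add (\<sigma> x) (L.nb (\<sigma> y)) | x y. x \<in> X \<and> y \<in> X}"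
abbreviation "D \<equiv> generate L.AG gensD"

lemma bstar: "b_star G add mul e a b = add (L.lam a b) (L.nb b)"
  unfolding b_star_def by simp

lemma gens2_sub: "gens2 \<subseteq> G" using bstar by auto
lemma gensD_sub: "gensD \<subseteq> G" by auto

lemma Sq_sg: "subgroup Sq L.AG"
  unfolding b_square_def using L.A.generate_is_subgroup[of gens2] gens2_sub by simp
lemma D_sg: "subgroup D L.AG"
  using L.A.generate_is_subgroup[of gensD] gensD_sub by simp

lemma sg_props: assumes "subgroup H L.AG"
  shows "H \<subseteq> G" "e \<in> H" "\<And>a b. a \<in> H \<Longrightarrow> b \<in> H \<Longrightarrow> add a b \<in> H" "\<And>a. a \<in> H \<Longrightarrow> L.nb a \<in> H"
  using subgroup.subset[OF assms] subgroup.one_closed[OF assms] subgroup.m_closed[OF assms]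
    subgroup.m_inv_closed[OF assms] unfolding b_neg_def by auto

lemma lam_bstar: assumes "a \<in> G" "b \<in> G" "c \<in> G"
  shows "L.lam c (b_star G add mul e a b) = b_star G add mul e (mul (mul c a) (L.minv c)) (L.lam c b)"
proof -
  have "L.lam (mul (mul c a) (L.minv c)) (L.lam c b) = L.lam (mul c a) (L.lam (L.minv c) (L.lam c b))"
    using assms by (intro L.lam_mul) auto
  also have "\<dots> = L.lam (mul c a) b" using assms by simp
  also have "\<dots> = L.lam c (L.lam a b)" using assms by (intro L.lam_mul) auto
  finally have 1: "L.lam (mul (mul c a) (L.minv c)) (L.lam c b) = L.lam c (L.lam a b)" .
  have "L.lam c (b_star G add mul e a b) = add (L.lam c (L.lam a b)) (L.nb (L.lam c b))"
    using assms by (simp add: bstar L.lam_add L.lam_nb)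
  then show ?thesis using 1 by (simp add: bstar)
qed

lemma Sq_ideal: "b_ideal G add mul e Sq"
proof (rule L.ideal_intro[OF Sq_sg])
  show "L.lam c j \<in> Sq" if "c \<in> G" "j \<in> Sq" for c j
  proof -
    have "j \<in> generate L.AG gens2" using that unfolding b_square_def by simp
    then have "L.lam c j \<in> generate L.AG gens2"
    proof (induction rule: generate.induct)
      case one
      then show ?case using that generate.one[of L.AG gens2] by simp
    next
      case (incl h)
      then obtain a b where ab: "a \<in> G" "b \<in> G" "h = b_star G add mul e a b" by blast
      have "mul (mul c a) (L.minv c) \<in> G" "L.lam c b \<in> G" using ab that by auto
      then have "L.lam c h \<in> gens2" using lam_bstar[OF ab(1,2) that(1)] ab(3) by blast
      then show ?case by (rule generate.incl)
    next
      case (inv h)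
      then obtain a b where ab: "a \<in> G" "b \<in> G" "h = b_star G add mul e a b" by blast
      have "mul (mul c a) (L.minv c) \<in> G" "L.lam c b \<in> G" using ab that by auto
      then have hh: "L.lam c h \<in> gens2" using lam_bstar[OF ab(1,2) that(1)] ab(3) by blast
      have hG: "h \<in> G" using ab bstar by simp
      have "L.lam c (inv\<^bsub>L.AG\<^esub> h) = inv\<^bsub>L.AG\<^esub> (L.lam c h)"
        using L.lam_nb[OF that(1) hG] unfolding b_neg_def .
      then show ?case using generate.inv[OF hh] by simp
    next
      case (eng h1 h2)
      have "h1 \<in> G" using L.A.generate_in_carrier[OF _ eng.hyps(1)] gens2_sub by simp
      moreover have "h2 \<in> G" using L.A.generate_in_carrier[OF _ eng.hyps(2)] gens2_sub by simp
      ultimately have "L.lam c (h1 \<otimes>\<^bsub>L.AG\<^esub> h2) = (L.lam c h1) \<otimes>\<^bsub>L.AG\<^esub> (L.lam c h2)"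
        using that(1) L.lam_add by simp
      then show ?case using generate.eng[OF eng.IH] by simp
    qed
    then show ?thesis unfolding b_square_def by simp
  qed
  show "add (L.lam j c) (L.nb c) \<in> Sq" if "j \<in> Sq" "c \<in> G" for j c
  proof -
    have "j \<in> G" using that sg_props(1)[OF Sq_sg] by blast
    then have "b_star G add mul e j c \<in> gens2" using that by blast
    then have "add (L.lam j c) (L.nb c) \<in> gens2" using bstar by simp
    then show ?thesis unfolding b_square_def by (rule generate.incl)
  qed
qed

lemma Sq_ne: "Sq \<noteq> {e}"
proof
  assume Sq0: "Sq = {e}"
  obtain x0 where x0: "x0 \<in> X" using X_ne by blast
  have "s x y = y" if "x \<in> X" "y \<in> X" for x y
  proof -
    have "b_star G add mul e (\<sigma> x) (\<sigma> y) \<in> Sq" unfolding b_square_def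
      by (rule generate.incl) (use that in blast)
    then have "add (L.lam (\<sigma> x) (\<sigma> y)) (L.nb (\<sigma> y)) = e" using Sq0 bstar by simp
    then have "L.lam (\<sigma> x) (\<sigma> y) = \<sigma> y" using that
      by (metis L.add_eq_z L.lam_closed L.nb_closed L.nb_nb L.add_comm sig_G)
    then have "\<sigma> (s x y) = \<sigma> y" using natlam that by simp
    then show ?thesis using that sig_inj sc(1)[OF that] by blast
  qed
  then have "\<And>x y. x \<in> X \<Longrightarrow> y \<in> X \<Longrightarrow> s x y = s x0 y" using x0 by simp
  then show False using const_sigma_False[OF fin sol simple np x0] by blast
qed

lemma D_sub_ideal: assumes J: "b_ideal G add mul e J" and "J \<noteq> {e}" shows "D \<subseteq> J"
proof (rule L.A.generate_subgroup_incl)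
  show "gensD \<subseteq> J" using ideal_sig_cong[OF assms] unfolding L.cgr_def by blast
  show "subgroup J L.AG" using L.ideal_subgroupA[OF J] .
qed

lemma Sq_sub_D: "Sq \<subseteq> D"
proof -
  note Dp = sg_props[OF D_sg]
  have main: "\<forall>a\<in>G. add (L.lam a b) (L.nb b) \<in> D" if "b \<in> G" for b
  proof -
    have "b \<in> generate (BijGroup X) (\<sigma> ` X)" using that unfolding perm_group_def .
    then show ?thesis
    proof (induction rule: generate.induct)
      case one
      then show ?case using Dp(2) by simp
    next
      case (incl h)
      then obtain y where y: "y \<in> X" "h = \<sigma> y" by auto
      show ?case
      proof
        fix a assume a: "a \<in> G"
        have "add (L.lam a h) (L.nb h) = add (\<sigma> (a y)) (L.nb (\<sigma> y))" using y lamsig[OF a y(1)] by simp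
        moreover have "add (\<sigma> (a y)) (L.nb (\<sigma> y)) \<in> gensD" using y(1) G_app[OF a y(1)] by blast
        ultimately have "add (L.lam a h) (L.nb h) \<in> gensD" by simp
        then show "add (L.lam a h) (L.nb h) \<in> D" by (rule generate.incl)
      qed
    next
      case (inv h)
      then obtain y where y: "y \<in> X" "h = \<sigma> y" by auto
      then have hG: "h \<in> G" by simp
      define m where "m = L.minv h"
      have mG: "m \<in> G" using hG m_def by simp
      define w where "w = m y"
      have w: "w \<in> X" using G_app[OF mG y(1)] w_def by simp
      have "m = L.lam m (L.nb h)" using L.minv_eq_lam[OF hG] m_def by simp
      also have "\<dots> = L.nb (L.lam m h)" using L.lam_nb[OF mG hG] .
      also have "\<dots> = L.nb (\<sigma> w)" using lamsig[OF mG y(1)] y(2) w_def by simp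
      finally have "m = L.nb (\<sigma> w)" .
      moreover have "inv\<^bsub>BijGroup X\<^esub> h = m" using inv_eq[OF hG] m_def by simp
      ultimately have iv: "inv\<^bsub>BijGroup X\<^esub> h = L.nb (\<sigma> w)" by simp
      show ?case
      proof
        fix a assume a: "a \<in> G"
        have aw: "a w \<in> X" using G_app[OF a w] .
        have "L.lam a (L.nb (\<sigma> w)) = L.nb (L.lam a (\<sigma> w))" using L.lam_nb[OF a sig_G[OF w]] .
        also have "\<dots> = L.nb (\<sigma> (a w))" using lamsig[OF a w] by simp
        finally have "add (L.lam a (L.nb (\<sigma> w))) (L.nb (L.nb (\<sigma> w))) = add (L.nb (\<sigma> (a w))) (\<sigma> w)"
          using w by simp
        also have "\<dots> = add (\<sigma> w) (L.nb (\<sigma> (a w)))" using L.add_comm[of "L.nb (\<sigma> (a w))" "\<sigma> w"] w aw by simp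
        finally have eq: "add (L.lam a (L.nb (\<sigma> w))) (L.nb (L.nb (\<sigma> w))) = add (\<sigma> w) (L.nb (\<sigma> (a w)))" .
        have "add (\<sigma> w) (L.nb (\<sigma> (a w))) \<in> gensD" using w aw by blast
        then have "add (\<sigma> w) (L.nb (\<sigma> (a w))) \<in> D" by (rule generate.incl)
        then show "add (L.lam a (inv\<^bsub>BijGroup X\<^esub> h)) (L.nb (inv\<^bsub>BijGroup X\<^esub> h)) \<in> D"
          unfolding iv eq .
      qed
    next
      case (eng c d)
      have cd: "c \<in> G" "d \<in> G" unfolding perm_group_def by (rule eng.hyps(1), rule eng.hyps(2))
      show ?case
      proof
        fix a assume a: "a \<in> G"
        have eq: "add (L.lam a (mul c d)) (L.nb (mul c d)) =
          add (add (L.lam a c) (L.nb c)) (add (add (L.lam (mul a c) d) (L.nb d)) (L.nb (add (L.lam c d) (L.nb d))))"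
        proof -
          have 1: "L.lam (mul a c) d = L.lam a (L.lam c d)" using a cd by (intro L.lam_mul) auto
          have "add (L.lam a (mul c d)) (L.nb (mul c d)) = add (L.lam a (add c (L.lam c d))) (L.nb (add c (L.lam c d)))"
            using a cd L.mul_eq[of c d] by simp
          then show ?thesis unfolding 1 using a cd by (simp add: L.lam_add L.nb_add L.add_ac)
        qed
        have A: "add (L.lam a c) (L.nb c) \<in> D" using eng.IH(1) a by blast
        have "mul a c \<in> G" using a cd by simp
        then have B: "add (L.lam (mul a c) d) (L.nb d) \<in> D" using eng.IH(2) by blast
        have C: "add (L.lam c d) (L.nb d) \<in> D" using eng.IH(2) cd by blast
        show "add (L.lam a (mul c d)) (L.nb (mul c d)) \<in> D" unfolding eq
          by (rule Dp(3)[OF A Dp(3)[OF B Dp(4)[OF C]]])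
      qed
    qed
  qed
  show ?thesis unfolding b_square_def
  proof (rule L.A.generate_subgroup_incl[OF _ D_sg])
    show "gens2 \<subseteq> D" using main bstar by auto
  qed
qed

lemma I_eq: assumes "minimal_nonzero_ideal G add mul e I" shows "I = Sq" "I = D"
proof -
  have J: "b_ideal G add mul e I" "I \<noteq> {e}" using assms unfolding minimal_nonzero_ideal_def by auto
  have "D \<subseteq> I" using D_sub_ideal[OF J] .
  then have "Sq \<subseteq> I" using Sq_sub_D by blast
  then have "Sq = I" using assms Sq_ideal Sq_ne unfolding minimal_nonzero_ideal_def by blast
  then show "I = Sq" "I = D" using Sq_sub_D \<open>D \<subseteq> I\<close> by auto
qed

definition cos :: "('a \<Rightarrow> 'a) set \<Rightarrow> ('a \<Rightarrow> 'a) \<Rightarrow> ('a \<Rightarrow> 'a) set" where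
  "cos J a = {add a j | j. j \<in> J}"

lemma rcM: assumes J: "b_ideal G add mul e J" and a: "a \<in> G"
  shows "J #>\<^bsub>L.MG\<^esub> a = cos J a"
proof
  show "J #>\<^bsub>L.MG\<^esub> a \<subseteq> cos J a"
  proof
    fix u assume "u \<in> J #>\<^bsub>L.MG\<^esub> a"
    then obtain h where h: "h \<in> J" "u = mul h a" unfolding r_coset_def by auto
    have hG: "h \<in> G" using L.ideal_in[OF J h(1)] .
    define h' where "h' = mul (mul (L.minv a) h) a"
    have h': "h' \<in> J" "h' \<in> G" using L.ideal_conj(2)[OF J a h(1)] a hG unfolding h'_def by auto
    have "mul a h' = mul h a" unfolding h'_def using a hG by (simp flip: L.mul_assoc)
    then have "u = add a (L.lam a h')" using h a h' L.mul_eq by simp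
    moreover have "L.lam a h' \<in> J" using L.ideal_lam[OF J a h'(1)] .
    ultimately show "u \<in> cos J a" unfolding cos_def by blast
  qed
  show "cos J a \<subseteq> J #>\<^bsub>L.MG\<^esub> a"
  proof
    fix u assume "u \<in> cos J a"
    then obtain j where j: "j \<in> J" "u = add a j" unfolding cos_def by auto
    have jG: "j \<in> G" using L.ideal_in[OF J j(1)] .
    define j' where "j' = L.lam (L.minv a) j"
    have j': "j' \<in> J" "j' \<in> G" using L.ideal_lam[OF J _ j(1), of "L.minv a"] a jG unfolding j'_def by auto
    have "mul a j' = u" using a j' j jG L.mul_eq[of a j'] unfolding j'_def by simp
    define h where "h = mul (mul a j') (L.minv a)"
    have h: "h \<in> J" "h \<in> G" using L.ideal_conj(1)[OF J a j'(1)] a j' unfolding h_def by auto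
    have "mul h a = mul a j'" unfolding h_def using a j' by (simp add: L.mul_assoc)
    then have "mul h a = u" using \<open>mul a j' = u\<close> by simp
    then show "u \<in> J #>\<^bsub>L.MG\<^esub> a" unfolding r_coset_def using h by force
  qed
qed

lemma rcA: assumes J: "b_ideal G add mul e J" and a: "a \<in> G"
  shows "J #>\<^bsub>L.AG\<^esub> a = cos J a"
  unfolding r_coset_def cos_def using L.ideal_in[OF J] a L.add_comm by auto

lemma cos_eq: assumes J: "b_ideal G add mul e J" and ab: "a \<in> G" "b \<in> G" and d: "add a (L.nb b) \<in> J"
  shows "cos J a = cos J b"
proof -
  have "J #>\<^bsub>L.AG\<^esub> b = J #>\<^bsub>L.AG\<^esub> a"
  proof (rule L.A.repr_independence)
    show "b \<in> carrier L.AG" using ab by simp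
    show "subgroup J L.AG" using L.ideal_subgroupA[OF J] .
    have "a = add (add a (L.nb b)) b" using ab by (simp add: L.add_ac)
    then show "a \<in> J #>\<^bsub>L.AG\<^esub> b" unfolding r_coset_def using d by force
  qed
  then show ?thesis using rcA[OF J] ab by simp
qed

lemma cos_add: assumes J: "b_ideal G add mul e J" and ab: "a \<in> G" "b \<in> G"
  shows "set_op add (cos J a) (cos J b) = cos J (add a b)"
proof
  show "set_op add (cos J a) (cos J b) \<subseteq> cos J (add a b)"
  proof
    fix u assume "u \<in> set_op add (cos J a) (cos J b)"
    then obtain j k where jk: "j \<in> J" "k \<in> J" "u = add (add a j) (add b k)" unfolding set_op_def cos_def by auto
    have "u = add (add a b) (add j k)" using jk ab L.ideal_in[OF J] by (simp add: L.add_ac)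
    then show "u \<in> cos J (add a b)" unfolding cos_def using L.ideal_add[OF J jk(1,2)] by blast
  qed
  show "cos J (add a b) \<subseteq> set_op add (cos J a) (cos J b)"
  proof
    fix u assume "u \<in> cos J (add a b)"
    then obtain j where j: "j \<in> J" "u = add (add a b) j" unfolding cos_def by auto
    have "u = add (add a j) (add b e)" using j ab L.ideal_in[OF J] by (simp add: L.add_ac)
    moreover have "add a j \<in> cos J a" "add b e \<in> cos J b" unfolding cos_def using j L.ideal_z[OF J] by auto
    ultimately show "u \<in> set_op add (cos J a) (cos J b)" unfolding set_op_def by blast
  qed
qed

lemma cos_mul: assumes J: "b_ideal G add mul e J" and SJ: "Sq \<subseteq> J" and ab: "a \<in> G" "b \<in> G"
  shows "set_op mul (cos J a) (cos J b) = cos J (add a b)"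
proof -
  have st: "add (L.lam u v) (L.nb v) \<in> J" if "u \<in> G" "v \<in> G" for u v
  proof -
    have "b_star G add mul e u v \<in> Sq" unfolding b_square_def by (rule generate.incl) (use that in blast)
    then show ?thesis using SJ bstar by auto
  qed
  show ?thesis
  proof
    show "set_op mul (cos J a) (cos J b) \<subseteq> cos J (add a b)"
    proof
      fix w assume "w \<in> set_op mul (cos J a) (cos J b)"
      then obtain j k where jk: "j \<in> J" "k \<in> J" "w = mul (add a j) (add b k)" unfolding set_op_def cos_def by auto
      have jkG: "j \<in> G" "k \<in> G" using jk L.ideal_in[OF J] by auto
      define u where "u = add a j"
      have uG: "u \<in> G" using ab jkG u_def by simp
      define t where "t = add (L.lam u b) (L.nb b)"
      have t: "t \<in> J" "t \<in> G" using st[OF uG ab(2)] uG ab unfolding t_def by auto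
      have lk: "L.lam u k \<in> J" "L.lam u k \<in> G" using L.ideal_lam[OF J uG jk(2)] uG jkG by auto
      have "L.lam u b = add b t" unfolding t_def using uG ab by (simp add: L.add_ac)
      have "w = mul u (add b k)" using jk(3) u_def by simp
      also have "\<dots> = add u (L.lam u (add b k))" using L.mul_eq[of u "add b k"] uG ab jkG by simp
      also have "\<dots> = add u (add (L.lam u b) (L.lam u k))" using L.lam_add[of u b k] uG ab jkG by simp
      also have "\<dots> = add (add a j) (add (add b t) (L.lam u k))" using \<open>L.lam u b = add b t\<close> u_def by simp
      also have "\<dots> = add (add a b) (add j (add t (L.lam u k)))" using ab jkG t lk by (simp add: L.add_ac)
      finally have "w = add (add a b) (add j (add t (L.lam u k)))" .
      moreover have "add j (add t (L.lam u k)) \<in> J" using L.ideal_add[OF J] jk t lk by simp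
      ultimately show "w \<in> cos J (add a b)" unfolding cos_def by blast
    qed
    show "cos J (add a b) \<subseteq> set_op mul (cos J a) (cos J b)"
    proof
      fix w assume "w \<in> cos J (add a b)"
      then obtain j where j: "j \<in> J" "w = add (add a b) j" unfolding cos_def by auto
      have jG: "j \<in> G" using j L.ideal_in[OF J] by auto
      define m where "m = L.minv a"
      have mG: "m \<in> G" using ab m_def by simp
      define v where "v = L.lam m (add b j)"
      have vG: "v \<in> G" using mG ab jG v_def by simp
      have "mul a v = add a (L.lam a v)" using L.mul_eq[of a v] vG ab by simp
      also have "L.lam a v = add b j" unfolding v_def m_def using ab jG L.lam_inv(2)[of a "add b j"] by simp
      finally have "mul a v = w" using j ab jG by (simp add: L.add_ac)
      have "v = add (L.lam m b) (L.lam m j)" unfolding v_def using mG ab jG L.lam_add by simp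
      also have "\<dots> = add b (add (add (L.lam m b) (L.nb b)) (L.lam m j))" using mG ab jG by (simp add: L.add_ac)
      finally have "v = add b (add (add (L.lam m b) (L.nb b)) (L.lam m j))" .
      moreover have "add (add (L.lam m b) (L.nb b)) (L.lam m j) \<in> J"
        using L.ideal_add[OF J st[OF mG ab(2)] L.ideal_lam[OF J mG j(1)]] .
      ultimately have "v \<in> cos J b" unfolding cos_def by blast
      moreover have "a \<in> cos J a"
      proof -
        have "a = add a e" using ab by simp
        then show ?thesis unfolding cos_def using L.ideal_z[OF J] by blast
      qed
      ultimately show "w \<in> set_op mul (cos J a) (cos J b)" unfolding set_op_def using \<open>mul a v = w\<close> by blast
    qed
  qed
qed

lemma quot_eq: assumes J: "b_ideal G add mul e J"
  shows "quot_carrier G mul e J = {cos J a | a. a \<in> G}"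
  unfolding quot_carrier_def RCOSETS_def using rcM[OF J] by auto

lemma quot_eqA: assumes J: "b_ideal G add mul e J"
  shows "rcosets\<^bsub>L.AG\<^esub> J = {cos J a | a. a \<in> G}"
  unfolding RCOSETS_def using rcA[OF J] by auto

lemma trivial_quot: assumes J: "b_ideal G add mul e J" and SJ: "Sq \<subseteq> J"
  shows "trivial_brace (quot_carrier G mul e J) (set_op add) (set_op mul)"
  unfolding trivial_brace_def quot_eq[OF J] using cos_add[OF J] cos_mul[OF J SJ] by auto

lemma inv_sig: assumes y: "y \<in> X"
  shows "\<exists>w\<in>X. inv\<^bsub>BijGroup X\<^esub> (\<sigma> y) = L.nb (\<sigma> w)"
proof -
  define h where "h = \<sigma> y"
  have hG: "h \<in> G" using y h_def by simp
  define m where "m = L.minv h"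
  have mG: "m \<in> G" using hG m_def by simp
  define w where "w = m y"
  have w: "w \<in> X" using G_app[OF mG y] w_def by simp
  have "m = L.lam m (L.nb h)" using L.minv_eq_lam[OF hG] m_def by simp
  also have "\<dots> = L.nb (L.lam m h)" using L.lam_nb[OF mG hG] .
  also have "\<dots> = L.nb (\<sigma> w)" using lamsig[OF mG y] h_def w_def by simp
  finally have "m = L.nb (\<sigma> w)" .
  moreover have "inv\<^bsub>BijGroup X\<^esub> h = m" using inv_eq[OF hG] m_def by simp
  ultimately show ?thesis using w h_def by blast
qed

lemma cyclic_quot: assumes J: "b_ideal G add mul e J" and SJ: "Sq \<subseteq> J" and DJ: "D \<subseteq> J"
  shows "additive_cyclic (quot_carrier G mul e J) (set_op add) J"
proof -
  have sm: "set_op add = set_mult L.AG"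
    by (intro ext) (auto simp: set_op_def set_mult_def)
  have rec: "add_grp (quot_carrier G mul e J) (set_op add) J = L.AG Mod J"
    unfolding add_grp_def[of "quot_carrier G mul e J"] FactGroup_def using quot_eq[OF J] quot_eqA[OF J] sm by simp
  have sg: "subgroup J L.AG" using L.ideal_subgroupA[OF J] .
  have nrm: "J \<lhd> L.AG" using L.A.subgroup_imp_normal[OF sg] .
  have grp: "group (L.AG Mod J)" using normal.factorgroup_is_group[OF nrm] .
  have hom: "(\<lambda>a. J #>\<^bsub>L.AG\<^esub> a) \<in> hom L.AG (L.AG Mod J)" using normal.r_coset_hom_Mod[OF nrm] .
  obtain x0 where x0: "x0 \<in> X" using X_ne by blast
  define s0 where "s0 = \<sigma> x0"
  have s0G: "s0 \<in> G" using x0 s0_def by simp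
  have genD: "add (\<sigma> x) (L.nb (\<sigma> y)) \<in> J" if "x \<in> X" "y \<in> X" for x y
  proof -
    have "add (\<sigma> x) (L.nb (\<sigma> y)) \<in> gensD" using that by blast
    then have "add (\<sigma> x) (L.nb (\<sigma> y)) \<in> D" by (rule generate.incl)
    then show ?thesis using DJ by blast
  qed
  have pw: "s0 [^]\<^bsub>L.AG\<^esub> (k::int) \<in> G" for k using L.A.int_pow_closed s0G by simp
  have claim: "\<exists>k::int. add a (L.nb (s0 [^]\<^bsub>L.AG\<^esub> k)) \<in> J" if aG: "a \<in> G" for a
  proof -
    have "a \<in> generate (BijGroup X) (\<sigma> ` X)" using aG unfolding perm_group_def .
    then show ?thesis
    proof (induction rule: generate.induct)
      case one
      have "add e (L.nb (s0 [^]\<^bsub>L.AG\<^esub> (0::int))) = e" by simp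
      then show ?case using L.ideal_z[OF J] by (metis)
    next
      case (incl h)
      then obtain y where y: "y \<in> X" "h = \<sigma> y" by auto
      have "s0 [^]\<^bsub>L.AG\<^esub> (1::int) = s0" using L.A.int_pow_1 s0G by simp
      then have "add h (L.nb (s0 [^]\<^bsub>L.AG\<^esub> (1::int))) \<in> J" using genD[OF y(1) x0] y s0_def by simp
      then show ?case by blast
    next
      case (inv h)
      then obtain y where y: "y \<in> X" "h = \<sigma> y" by auto
      obtain w where w: "w \<in> X" "inv\<^bsub>BijGroup X\<^esub> h = L.nb (\<sigma> w)" using inv_sig[OF y(1)] y by blast
      have "s0 [^]\<^bsub>L.AG\<^esub> (-1::int) = L.nb s0" using L.A.int_pow_neg[of s0 1] L.A.int_pow_1 s0G
        unfolding b_neg_def by simp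
      then have "add (inv\<^bsub>BijGroup X\<^esub> h) (L.nb (s0 [^]\<^bsub>L.AG\<^esub> (-1::int))) = add (L.nb (\<sigma> w)) s0"
        using w s0G by simp
      also have "\<dots> = add s0 (L.nb (\<sigma> w))" using w s0G L.add_comm by simp
      finally have "add (inv\<^bsub>BijGroup X\<^esub> h) (L.nb (s0 [^]\<^bsub>L.AG\<^esub> (-1::int))) \<in> J"
        using genD[OF x0 w(1)] s0_def by simp
      then show ?case by blast
    next
      case (eng c d)
      have cd: "c \<in> G" "d \<in> G" unfolding perm_group_def by (rule eng.hyps(1), rule eng.hyps(2))
      obtain k :: int where k: "add c (L.nb (s0 [^]\<^bsub>L.AG\<^esub> k)) \<in> J" using eng.IH(1) by blast
      obtain l :: int where l: "add d (L.nb (s0 [^]\<^bsub>L.AG\<^esub> l)) \<in> J" using eng.IH(2) by blast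
      have bs: "b_star G add mul e c d \<in> J" using SJ unfolding b_square_def
        using generate.incl[of "b_star G add mul e c d" gens2 L.AG] cd by blast
      have pk: "s0 [^]\<^bsub>L.AG\<^esub> (k + l) = add (s0 [^]\<^bsub>L.AG\<^esub> k) (s0 [^]\<^bsub>L.AG\<^esub> l)"
        using L.A.int_pow_mult[of s0 k l] s0G by simp
      have "mul c d = add c (L.lam c d)" using L.mul_eq cd by simp
      also have "\<dots> = add c (add d (b_star G add mul e c d))" using cd by (simp add: bstar L.add_ac)
      finally have "add (mul c d) (L.nb (s0 [^]\<^bsub>L.AG\<^esub> (k + l))) =
          add (add c (L.nb (s0 [^]\<^bsub>L.AG\<^esub> k))) (add (add d (L.nb (s0 [^]\<^bsub>L.AG\<^esub> l))) (b_star G add mul e c d))"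
        using pk cd pw by (simp add: L.nb_add L.add_ac bstar)
      then have "add (mul c d) (L.nb (s0 [^]\<^bsub>L.AG\<^esub> (k + l))) \<in> J"
        using L.ideal_add[OF J k L.ideal_add[OF J l bs]] by simp
      then show ?case by blast
    qed
  qed
  define gg where "gg = J #>\<^bsub>L.AG\<^esub> s0"
  have Qeq: "quot_carrier G mul e J = carrier (L.AG Mod J)"
    using quot_eq[OF J] quot_eqA[OF J] unfolding FactGroup_def by simp
  have "quot_carrier G mul e J = {gg [^]\<^bsub>L.AG Mod J\<^esub> (n::int) | n. True}"
  proof
    show "quot_carrier G mul e J \<subseteq> {gg [^]\<^bsub>L.AG Mod J\<^esub> (n::int) | n. True}"
    proof
      fix U assume "U \<in> quot_carrier G mul e J"
      then obtain a where a: "a \<in> G" "U = cos J a" using quot_eq[OF J] by auto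
      obtain k :: int where k: "add a (L.nb (s0 [^]\<^bsub>L.AG\<^esub> k)) \<in> J" using claim[OF a(1)] by blast
      have "U = cos J (s0 [^]\<^bsub>L.AG\<^esub> k)" using cos_eq[OF J a(1) pw k] a by simp
      also have "\<dots> = J #>\<^bsub>L.AG\<^esub> (s0 [^]\<^bsub>L.AG\<^esub> k)" using rcA[OF J pw] by simp
      also have "\<dots> = gg [^]\<^bsub>L.AG Mod J\<^esub> k" unfolding gg_def
        using hom_int_pow[OF hom _ L.A.is_group grp, of s0 k] s0G by simp
      finally show "U \<in> {gg [^]\<^bsub>L.AG Mod J\<^esub> (n::int) | n. True}" by blast
    qed
    show "{gg [^]\<^bsub>L.AG Mod J\<^esub> (n::int) | n. True} \<subseteq> quot_carrier G mul e J"
    proof -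
      have "gg \<in> carrier (L.AG Mod J)" unfolding gg_def using hom s0G unfolding hom_def by auto
      then show ?thesis using group.int_pow_closed[OF grp] Qeq by auto
    qed
  qed
  moreover have "gg \<in> quot_carrier G mul e J" unfolding gg_def using Qeq hom s0G unfolding hom_def by auto
  ultimately show ?thesis unfolding additive_cyclic_def rec by blast
qed

end

theorem mainTheorem3:
  fixes X :: "'a set" and s g :: "'a \<Rightarrow> 'a \<Rightarrow> 'a"
    and add :: "('a \<Rightarrow> 'a) \<Rightarrow> ('a \<Rightarrow> 'a) \<Rightarrow> ('a \<Rightarrow> 'a)"
    and I :: "('a \<Rightarrow> 'a) set"
  assumes fin: "finite X"
    and sol: "ybe_solution X s g"
    and simple: "simple_solution X s g"
    and notprime: "\<not> prime (card X)"
    and nat: "natural_brace_add X s add"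
    and minI: "minimal_nonzero_ideal (perm_group X s) add (monoid.mult (BijGroup X)) (one (BijGroup X)) I"
  shows "trivial_brace (quot_carrier (perm_group X s) (monoid.mult (BijGroup X)) (one (BijGroup X)) I)
            (set_op add) (set_op (monoid.mult (BijGroup X)))
       \<and> additive_cyclic (quot_carrier (perm_group X s) (monoid.mult (BijGroup X)) (one (BijGroup X)) I)
            (set_op add) I
       \<and> I = b_square (perm_group X s) add (monoid.mult (BijGroup X)) (one (BijGroup X))
       \<and> I = generate (add_grp (perm_group X s) add (one (BijGroup X)))
              {add (sig X s x) (b_neg (perm_group X s) add (one (BijGroup X)) (sig X s y)) | x y. x \<in> X \<and> y \<in> X}
       \<and> b_socle (perm_group X s) add (monoid.mult (BijGroup X)) = {one (BijGroup X)}"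
  proof -
  interpret S: setting X s g add using fin sol simple notprime nat by unfold_locales
  have J: "b_ideal (perm_group X s) add (monoid.mult (BijGroup X)) (one (BijGroup X)) I"
    using minI unfolding minimal_nonzero_ideal_def by blast
  have IS: "I = S.Sq" "I = S.D" using S.I_eq[OF minI] by auto
  have SJ: "S.Sq \<subseteq> I" "S.D \<subseteq> I" using IS by auto
  show ?thesis
    using S.trivial_quot[OF J SJ(1)] S.cyclic_quot[OF J SJ(1) SJ(2)] IS S.socle by blast
qed

end
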